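(* Let $\mathcal{H}$ be a complex Hilbert space and let $A\in\mathcal{B}(\mathcal{H})$ be a positive operator with $\dim R(A)\ge 2$. Let $T\in\mathcal{B}_A(\mathcal{H})$ and let $q\in\mathbb{C}$ with $0<|q|\le 1$. Then \[ \frac{|q|^2}{4}\,\big\|T^{\sharp_A}T+TT^{\sharp_A}\big\|_A\;\le\; w_{q,A}^2(T)\;\le\;\frac{2-|q|^2+4|q|\sqrt{1-|q|^2}}{2}\,\big\|TT^{\sharp_A}+T^{\sharp_A}T\big\|_A . \]
   Context: $A$ induces the semi-inner product $\langle x,y\rangle_A=\langle Ax,y\rangle$ and seminorm $\|x\|_A=\sqrt{\langle x,x\rangle_A}$. For an operator $S$, $\|S\|_A=\sup\{\|Sx\|_A/\|x\|_A : x\in\overline{R(A)},\,x\neq 0\}$. An operator $W$ is an $A$-adjoint of $T$ if $\langle Tx,y\rangle_A=\langle x,Wy\rangle_A$ for all $x,y$; $\mathcal{B}_A(\mathcal{H})$ is the set of operators admitting an $A$-adjoint, and for $T\in\mathcal{B}_A(\mathcal{H})$, $T^{\sharp_A}$ denotes the unique solution $X$ of $AX=T^*A$ with $R(X)\subseteq \overline{R(A)}$ (the reduced solution). For $q$ with $|q|\le1$, the $A$-$q$-numerical radius is $w_{q,A}(T)=\sup\{|\langle Tx,y\rangle_A| : \|x\|_A=\|y\|_A=1,\ \langle x,y\rangle_A=q\}$. *)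

theory Defs
  imports "HOL-Analysis.Analysis"
begin

text \<open>The inner
 product is linear in the first and conjugate-linear in the second argument.\<close>

class complex_vector = real_vector +
  fixes scaleC :: "complex \<Rightarrow> 'a \<Rightarrow> 'a"  (infixr \<open>*\<^sub>C\<close> 75)
  assumes scaleC_add_right: "a *\<^sub>C (x + y) = a *\<^sub>C x + a *\<^sub>C y"
    and scaleC_add_left: "(a + b) *\<^sub>C x = a *\<^sub>C x + b *\<^sub>C x"
    and scaleC_scaleC: "a *\<^sub>C (b *\<^sub>C x) = (a * b) *\<^sub>C x"
    and scaleC_one: "1 *\<^sub>C x = x"
    and scaleR_scaleC: "scaleR r x = complex_of_real r *\<^sub>C x"

class complex_inner = complex_vector + real_normed_vector +
  fixes cinner :: "'a \<Rightarrow> 'a \<Rightarrow> complex"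
  assumes cinner_commute: "cinner x y = cnj (cinner y x)"
    and cinner_add_left: "cinner (x + y) z = cinner x z + cinner y z"
    and cinner_scaleC_left: "cinner (r *\<^sub>C x) y = r * cinner x y"
    and cinner_ge_zero: "0 \<le> Re (cinner x x)"
    and cinner_eq_zero_iff: "cinner x x = 0 \<longleftrightarrow> x = 0"
    and norm_eq_sqrt_cinner: "norm x = sqrt (Re (cinner x x))"

class chilbert_space = complex_inner + complete_space

definition bounded_clinear :: "('a::complex_inner \<Rightarrow> 'a) \<Rightarrow> bool" where
  "bounded_clinear T \<longleftrightarrow>
     (\<forall>x y. T (x + y) = T x + T y) \<and> (\<forall>c x. T (c *\<^sub>C x) = c *\<^sub>C T x) \<and>
     (\<exists>K. \<forall>x. norm (T x) \<le> norm x * K)"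

definition hadjoint :: "('a::complex_inner \<Rightarrow> 'a) \<Rightarrow> ('a \<Rightarrow> 'a)" where
  "hadjoint T = (THE S. \<forall>x y. cinner (T x) y = cinner x (S y))"

definition positive_op :: "('a::complex_inner \<Rightarrow> 'a) \<Rightarrow> bool" where
  "positive_op A \<longleftrightarrow> bounded_clinear A \<and> (\<forall>x. cinner (A x) x \<in> \<real> \<and> 0 \<le> Re (cinner (A x) x))"

definition dim_range_ge2 :: "('a::complex_inner \<Rightarrow> 'a) \<Rightarrow> bool" where
  "dim_range_ge2 A \<longleftrightarrow> (\<exists>u\<in>range A. \<exists>v\<in>range A.
      \<forall>a b. a *\<^sub>C u + b *\<^sub>C v = 0 \<longrightarrow> a = 0 \<and> b = 0)"

definition innerA :: "('a::complex_inner \<Rightarrow> 'a) \<Rightarrow> 'a \<Rightarrow> 'a \<Rightarrow> complex" where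
  "innerA A x y = cinner (A x) y"

definition normA :: "('a::complex_inner \<Rightarrow> 'a) \<Rightarrow> 'a \<Rightarrow> real" where
  "normA A x = sqrt (Re (innerA A x x))"

definition opnormA :: "('a::complex_inner \<Rightarrow> 'a) \<Rightarrow> ('a \<Rightarrow> 'a) \<Rightarrow> real" where
  "opnormA A S = Sup {normA A (S x) / normA A x | x. x \<in> closure (range A) \<and> x \<noteq> 0}"

definition is_A_adjoint :: "('a::complex_inner \<Rightarrow> 'a) \<Rightarrow> ('a \<Rightarrow> 'a) \<Rightarrow> ('a \<Rightarrow> 'a) \<Rightarrow> bool" where
  "is_A_adjoint A T W \<longleftrightarrow> (\<forall>x y. innerA A (T x) y = innerA A x (W y))"

definition BA :: "('a::complex_inner \<Rightarrow> 'a) \<Rightarrow> ('a \<Rightarrow> 'a) set" where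
  "BA A = {T. bounded_clinear T \<and> (\<exists>W. bounded_clinear W \<and> is_A_adjoint A T W)}"

definition sharpA :: "('a::complex_inner \<Rightarrow> 'a) \<Rightarrow> ('a \<Rightarrow> 'a) \<Rightarrow> ('a \<Rightarrow> 'a)" where
  "sharpA A T = (THE X. bounded_clinear X \<and> A \<circ> X = hadjoint T \<circ> A \<and> range X \<subseteq> closure (range A))"

definition wqA :: "complex \<Rightarrow> ('a::complex_inner \<Rightarrow> 'a) \<Rightarrow> ('a \<Rightarrow> 'a) \<Rightarrow> real" where
  "wqA q A T = Sup {cmod (innerA A (T x) y) | x y.
      normA A x = 1 \<and> normA A y = 1 \<and> innerA A x y = q}"

end

theory Submission
  imports Defs
begin

lemma scaleC_zero_left [simp]: "(0::complex) *\<^sub>C (x::'a::complex_vector) = 0"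
proof -
  have "0 *\<^sub>C x = (0 + 0) *\<^sub>C x" by simp
  also have "\<dots> = 0 *\<^sub>C x + 0 *\<^sub>C x" by (rule scaleC_add_left)
  finally show ?thesis by simp
qed

lemma scaleC_zero_right [simp]: "(a::complex) *\<^sub>C (0::'a::complex_vector) = 0"
proof -
  have "a *\<^sub>C (0::'a) = a *\<^sub>C (0 + 0)" by simp
  also have "\<dots> = a *\<^sub>C 0 + a *\<^sub>C 0" by (rule scaleC_add_right)
  finally show ?thesis by simp
qed

lemma scaleC_minus_right: "(a::complex) *\<^sub>C (- (x::'a::complex_vector)) = - (a *\<^sub>C x)"
  by (metis add.right_inverse add_eq_0_iff scaleC_add_right scaleC_zero_right)

lemma scaleC_minus_left: "(- a::complex) *\<^sub>C ((x::'a::complex_vector)) = - (a *\<^sub>C x)"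
  by (metis add.right_inverse add_eq_0_iff scaleC_add_left scaleC_zero_left)

lemma scaleC_diff_right: "(a::complex) *\<^sub>C ((x::'a::complex_vector) - y) = a *\<^sub>C x - a *\<^sub>C y"
  by (simp only: diff_conv_add_uminus scaleC_add_right scaleC_minus_right)

lemma scaleC_diff_left: "(a - b::complex) *\<^sub>C ((x::'a::complex_vector)) = a *\<^sub>C x - b *\<^sub>C x"
  by (simp only: diff_conv_add_uminus scaleC_add_left scaleC_minus_left)

lemma scaleC_of_real: "complex_of_real r *\<^sub>C (x::'a::complex_vector) = r *\<^sub>R x"
  by (simp add: scaleR_scaleC)

lemma minus_one_scaleC: "(-1::complex) *\<^sub>C (x::'a::complex_vector) = - x"
  by (simp add: scaleC_minus_left scaleC_one)

lemma cinner_zero_left [simp]: "cinner 0 (y::'a::complex_inner) = 0"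
  by (metis add.right_neutral add_left_cancel cinner_add_left)

lemma cinner_minus_left: "cinner (- x) (y::'a::complex_inner) = - cinner x y"
  by (metis add.right_inverse add_eq_0_iff cinner_add_left cinner_zero_left)

lemma cinner_diff_left: "cinner (x - z) (y::'a::complex_inner) = cinner x y - cinner z y"
  by (simp only: diff_conv_add_uminus cinner_add_left cinner_minus_left)

lemma cinner_add_right: "cinner x (y + (z::'a::complex_inner)) = cinner x y + cinner x z"
  by (metis cinner_add_left cinner_commute complex_cnj_add)

lemma cinner_zero_right [simp]: "cinner (x::'a::complex_inner) 0 = 0"
  by (metis cinner_commute cinner_zero_left complex_cnj_zero)

lemma cinner_minus_right: "cinner x (- (y::'a::complex_inner)) = - cinner x y"
  by (metis cinner_commute cinner_minus_left complex_cnj_minus)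

lemma cinner_diff_right: "cinner x (y - (z::'a::complex_inner)) = cinner x y - cinner x z"
  by (simp only: diff_conv_add_uminus cinner_add_right cinner_minus_right)

lemma cinner_scaleC_right: "cinner x (r *\<^sub>C (y::'a::complex_inner)) = cnj r * cinner x y"
  by (metis cinner_commute cinner_scaleC_left complex_cnj_mult)

lemma cinner_self_real: "cinner x (x::'a::complex_inner) = complex_of_real (Re (cinner x x))"
  by (metis cinner_commute complex_cnj_cancel_iff complex_is_Real_iff Reals_cnj_iff of_real_Re)

lemma norm_sq_cinner: "(norm (x::'a::complex_inner))\<^sup>2 = Re (cinner x x)"
  by (simp add: norm_eq_sqrt_cinner cinner_ge_zero)

lemma cinner_self_norm: "cinner x (x::'a::complex_inner) = complex_of_real ((norm x)\<^sup>2)"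
  by (metis cinner_self_real norm_sq_cinner)

lemma norm_scaleC: "norm (c *\<^sub>C (x::'a::complex_inner)) = cmod c * norm x"
proof -
  have "(norm (c *\<^sub>C x))\<^sup>2 = Re (c * cnj c * cinner x x)"
    by (simp only: norm_sq_cinner cinner_scaleC_left cinner_scaleC_right mult.assoc mult.left_commute)
  also have "\<dots> = Re (complex_of_real ((cmod c)\<^sup>2) * complex_of_real ((norm x)\<^sup>2))"
    by (simp only: cinner_self_norm complex_norm_square)
  also have "\<dots> = (cmod c)\<^sup>2 * (norm x)\<^sup>2"
    by (simp del: of_real_power)
  finally have "(norm (c *\<^sub>C x))\<^sup>2 = (cmod c * norm x)\<^sup>2" by (simp add: power_mult_distrib)
  then show ?thesis by (simp add: power2_eq_iff_nonneg)
qed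

lemma cinner_eq_zero_all: "(\<And>z. cinner (z::'a::complex_inner) x = cinner z y) \<Longrightarrow> x = y"
  by (metis cinner_diff_right cinner_eq_zero_iff cinner_commute diff_self eq_iff_diff_eq_0)

section \<open>Bounded complex-linear maps\<close>

lemma bcl_add: "bounded_clinear T \<Longrightarrow> T (x + y) = T x + T y"
  by (simp add: bounded_clinear_def)
lemma bcl_scaleC: "bounded_clinear T \<Longrightarrow> T (c *\<^sub>C x) = c *\<^sub>C T x"
  by (simp add: bounded_clinear_def)
lemma bcl_zero: "bounded_clinear T \<Longrightarrow> T 0 = 0"
  by (metis bcl_scaleC scaleC_zero_left)
lemma bcl_minus: "bounded_clinear T \<Longrightarrow> T (- x) = - T x"
  by (metis bcl_scaleC minus_one_scaleC)
lemma bcl_diff: "bounded_clinear T \<Longrightarrow> T (x - y) = T x - T y"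
  by (simp add: bcl_add bcl_minus diff_conv_add_uminus del: add_uminus_conv_diff)
lemma bcl_scaleR: "bounded_clinear T \<Longrightarrow> T (r *\<^sub>R x) = r *\<^sub>R T x"
  by (metis bcl_scaleC scaleC_of_real)
lemma bcl_bound: "bounded_clinear T \<Longrightarrow> \<exists>K>0. \<forall>x. norm (T x) \<le> norm x * K"
proof -
  assume "bounded_clinear T"
  then obtain K where K: "\<forall>x. norm (T x) \<le> norm x * K" by (auto simp: bounded_clinear_def)
  have "\<forall>x. norm (T x) \<le> norm x * (\<bar>K\<bar> + 1)"
  proof
    fix x
    have "norm (T x) \<le> norm x * K" using K by auto
    have "norm x * K \<le> norm x * (\<bar>K\<bar> + 1)" by (intro mult_left_mono) auto
    then show "norm (T x) \<le> norm x * (\<bar>K\<bar> + 1)" using K by (meson order_trans)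
  qed
  then show ?thesis by (intro exI[of _ "\<bar>K\<bar> + 1"]) auto
qed
lemma bcl_bounded_linear: "bounded_clinear T \<Longrightarrow> bounded_linear T"
proof -
  assume T: "bounded_clinear T"
  then obtain K where K: "\<forall>x. norm (T x) \<le> norm x * K" by (auto simp: bounded_clinear_def)
  show ?thesis by (rule bounded_linear_intro[where K=K]) (use T K bcl_add bcl_scaleR in auto)
qed
lemma bcl_comp: "bounded_clinear S \<Longrightarrow> bounded_clinear T \<Longrightarrow> bounded_clinear (\<lambda>x. S (T x))"
proof -
  assume S: "bounded_clinear S" and T: "bounded_clinear T"
  obtain K1 where K1: "K1 > 0" "\<forall>x. norm (S x) \<le> norm x * K1" using bcl_bound[OF S] by auto
  obtain K2 where K2: "K2 > 0" "\<forall>x. norm (T x) \<le> norm x * K2" using bcl_bound[OF T] by auto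
  have "\<forall>x. norm (S (T x)) \<le> norm x * (K2 * K1)"
  proof
    fix x
    have "norm (S (T x)) \<le> norm (T x) * K1" using K1 by auto
    also have "\<dots> \<le> (norm x * K2) * K1" using K1 K2 by (intro mult_right_mono) auto
    finally show "norm (S (T x)) \<le> norm x * (K2 * K1)" by (simp add: mult.assoc)
  qed
  then show ?thesis using S T by (auto simp: bounded_clinear_def)
qed
lemma bcl_plus: "bounded_clinear S \<Longrightarrow> bounded_clinear T \<Longrightarrow> bounded_clinear (\<lambda>x. S x + T x)"
proof -
  assume S: "bounded_clinear S" and T: "bounded_clinear T"
  obtain K1 where K1: "K1 > 0" "\<forall>x. norm (S x) \<le> norm x * K1" using bcl_bound[OF S] by auto
  obtain K2 where K2: "K2 > 0" "\<forall>x. norm (T x) \<le> norm x * K2" using bcl_bound[OF T] by auto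
  have "\<forall>x. norm (S x + T x) \<le> norm x * (K1 + K2)"
  proof
    fix x
    have "norm (S x + T x) \<le> norm (S x) + norm (T x)" by (rule norm_triangle_ineq)
    also have "\<dots> \<le> norm x * K1 + norm x * K2" using K1 K2 by (intro add_mono) auto
    finally show "norm (S x + T x) \<le> norm x * (K1 + K2)" by (simp add: distrib_left)
  qed
  moreover have "\<forall>x y. S (x+y) + T (x+y) = (S x + T x) + (S y + T y)"
    by (simp add: bcl_add[OF S] bcl_add[OF T] algebra_simps)
  moreover have "\<forall>c x. S (c *\<^sub>C x) + T (c *\<^sub>C x) = c *\<^sub>C (S x + T x)"
    by (simp add: bcl_scaleC[OF S] bcl_scaleC[OF T] scaleC_add_right)
  ultimately show ?thesis unfolding bounded_clinear_def by blast
qed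
lemma bcl_id: "bounded_clinear (\<lambda>x. x)"
  by (auto simp: bounded_clinear_def intro: exI[of _ 1])

section \<open>Positive operators are selfadjoint\<close>

lemma positive_selfadj:
  assumes "positive_op A"
  shows "cinner (A x) y = cinner x (A y)"
proof -
  have lin: "bounded_clinear A" using assms by (simp add: positive_op_def)
  have diag: "cinner (A u) u = cinner u (A u)" for u
  proof -
    have "cinner (A u) u \<in> \<real>" using assms by (simp add: positive_op_def)
    then show ?thesis by (metis Reals_cnj_iff cinner_commute)
  qed
  define a where "a = cinner (A x) y"
  define b where "b = cinner x (A y)"
  define c where "c = cinner (A y) x"
  define d where "d = cinner y (A x)"
  have e1: "(a - b) + (c - d) = 0"
  proof -
    have "cinner (A (x + y)) (x + y) = cinner (x + y) (A (x + y))" by (rule diag)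
    then have "cinner (A x) x + a + c + cinner (A y) y = cinner x (A x) + b + d + cinner y (A y)"
      by (simp add: a_def b_def c_def d_def bcl_add[OF lin] cinner_add_left cinner_add_right
          algebra_simps)
    then show ?thesis using diag[of x] diag[of y] by (simp add: algebra_simps)
  qed
  have e2: "- \<i> * (a - b) + \<i> * (c - d) = 0"
  proof -
    have "cinner (A (x + \<i> *\<^sub>C y)) (x + \<i> *\<^sub>C y) = cinner (x + \<i> *\<^sub>C y) (A (x + \<i> *\<^sub>C y))" by (rule diag)
    then have "cinner (A x) x + \<i> * c + cnj \<i> * (a + \<i> * cinner (A y) y) =
     cinner x (A x) + \<i> * d + cnj \<i> * (b + \<i> * cinner y (A y))"
      by (simp only: a_def b_def c_def d_def bcl_add[OF lin] bcl_scaleC[OF lin] cinner_add_left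
          cinner_add_right cinner_scaleC_left cinner_scaleC_right)
    then have "cinner (A x) x + (- \<i>) * a + \<i> * c + cinner (A y) y
        = cinner x (A x) + (- \<i>) * b + \<i> * d + cinner y (A y)"
      by (simp add: algebra_simps)
    then show ?thesis using diag[of x] diag[of y] by (simp add: algebra_simps)
  qed
  have cd: "c - d = - (a - b)" unfolding eq_neg_iff_add_eq_0 using e1 by (simp only: add.commute)
  have "(-2*\<i>) * (a - b) = 0" using e2[unfolded cd] by (simp add: algebra_simps)
  then have "a = b" by simp
  then show ?thesis by (simp add: a_def b_def)
qed

section \<open>The A-semi-inner product\<close>

locale posop =
  fixes A :: "'a::complex_inner \<Rightarrow> 'a"
  assumes pos: "positive_op A"
begin

lemma lin: "bounded_clinear A" using pos by (simp add: positive_op_def)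

lemma sa: "cinner (A x) y = cinner x (A y)" by (rule positive_selfadj[OF pos])

lemma iA_add_left: "innerA A (x + y) z = innerA A x z + innerA A y z"
  by (simp add: innerA_def bcl_add[OF lin] cinner_add_left)
lemma iA_add_right: "innerA A x (y + z) = innerA A x y + innerA A x z"
  by (simp add: innerA_def cinner_add_right)
lemma iA_scaleC_left: "innerA A (c *\<^sub>C x) z = c * innerA A x z"
  by (simp add: innerA_def bcl_scaleC[OF lin] cinner_scaleC_left)
lemma iA_scaleC_right: "innerA A x (c *\<^sub>C z) = cnj c * innerA A x z"
  by (simp add: innerA_def cinner_scaleC_right)
lemma iA_diff_left: "innerA A (x - y) z = innerA A x z - innerA A y z"
  by (simp add: innerA_def bcl_diff[OF lin] cinner_diff_left)
lemma iA_diff_right: "innerA A x (y - z) = innerA A x y - innerA A x z"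
  by (simp add: innerA_def cinner_diff_right)
lemma iA_minus_left: "innerA A (- x) z = - innerA A x z"
  by (simp add: innerA_def bcl_minus[OF lin] cinner_minus_left)
lemma iA_minus_right: "innerA A x (- z) = - innerA A x z"
  by (simp add: innerA_def cinner_minus_right)
lemma iA_zero_left [simp]: "innerA A 0 z = 0"
  by (simp add: innerA_def bcl_zero[OF lin])
lemma iA_zero_right [simp]: "innerA A z 0 = 0"
  by (simp add: innerA_def)
lemma iA_herm: "innerA A x y = cnj (innerA A y x)"
  by (metis cinner_commute innerA_def sa)
lemma iA_self_real: "innerA A x x = complex_of_real (Re (innerA A x x))"
  by (metis iA_herm complex_cnj_cancel_iff complex_is_Real_iff Reals_cnj_iff of_real_Re)
lemma iA_self_nonneg: "0 \<le> Re (innerA A x x)"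
  using pos unfolding positive_op_def innerA_def by blast
lemma nA_sq: "(normA A x)\<^sup>2 = Re (innerA A x x)"
  unfolding normA_def using iA_self_nonneg[of x] by simp
lemma iA_self_nA: "innerA A x x = complex_of_real ((normA A x)\<^sup>2)"
  by (metis iA_self_real nA_sq)
lemma nA_nonneg: "0 \<le> normA A x" by (simp add: normA_def iA_self_nonneg)

lemmas iA_simps = iA_add_left iA_add_right iA_scaleC_left iA_scaleC_right iA_diff_left
  iA_diff_right iA_minus_left iA_minus_right

lemma iA_expand: "innerA A (x - l *\<^sub>C y) (x - l *\<^sub>C y) =
   innerA A x x - cnj l * innerA A x y - l * innerA A y x + l * cnj l * innerA A y y"
  by (simp add: iA_simps algebra_simps)

lemma quad_lemma:
  fixes a k c :: real
  assumes "\<And>t. 0 \<le> a - 2*t*k + t\<^sup>2*k*c" "0 \<le> k" "0 \<le> c"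
  shows "k \<le> a * c"
proof (cases "c = 0")
  case True
  show ?thesis
  proof (rule ccontr)
    assume "\<not> k \<le> a * c"
    then have "k > 0" using True by simp
    have "0 \<le> a - 2*((a+1)/(2*k))*k" using assms(1)[of "(a+1)/(2*k)"] True by simp
    also have "\<dots> = -1" using \<open>k > 0\<close> by (simp add: field_simps)
    finally show False by simp
  qed
next
  case False
  then have c: "c > 0" using assms by simp
  have "0 \<le> a - 2*(1/c)*k + (1/c)\<^sup>2*k*c" by (rule assms(1))
  also have "\<dots> = a - k / c" using c by (simp add: field_simps power2_eq_square)
  finally show ?thesis using c by (simp add: field_simps)
qed

lemma CS_sq: "(cmod (innerA A x y))\<^sup>2 \<le> Re (innerA A x x) * Re (innerA A y y)"
proof -
  define b where "b = innerA A x y"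
  define a where "a = Re (innerA A x x)"
  define c where "c = Re (innerA A y y)"
  define k where "k = (cmod b)\<^sup>2"
  have hxx: "innerA A x x = complex_of_real a" by (simp add: a_def iA_self_real[symmetric])
  have hyy: "innerA A y y = complex_of_real c" by (simp add: c_def iA_self_real[symmetric])
  have hyx: "innerA A y x = cnj b" by (simp add: b_def iA_herm[of y x])
  have bb: "b * cnj b = complex_of_real k" by (simp only: k_def complex_norm_square)
  have "0 \<le> a - 2*t*k + t\<^sup>2*k*c" for t
  proof -
    have "innerA A (x - (complex_of_real t * b) *\<^sub>C y) (x - (complex_of_real t * b) *\<^sub>C y)
       = complex_of_real a - complex_of_real t * (b * cnj b) - complex_of_real t * (b * cnj b)
         + complex_of_real t * complex_of_real t * (b * cnj b) * complex_of_real c"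
      unfolding iA_expand hxx hyy hyx b_def[symmetric] by (simp add: algebra_simps)
    also have "\<dots> = complex_of_real (a - 2*t*k + t\<^sup>2*k*c)"
      by (simp add: bb power2_eq_square algebra_simps)
    finally show ?thesis using iA_self_nonneg[of "x - (complex_of_real t * b) *\<^sub>C y"] by simp
  qed
  moreover have "0 \<le> k" by (simp add: k_def)
  moreover have "0 \<le> c" by (simp add: c_def iA_self_nonneg)
  ultimately have "k \<le> a * c" by (rule quad_lemma)
  then show ?thesis by (simp add: k_def a_def c_def b_def)
qed

lemma CS: "cmod (innerA A x y) \<le> normA A x * normA A y"
proof -
  have "(cmod (innerA A x y))\<^sup>2 \<le> (normA A x * normA A y)\<^sup>2"
    using CS_sq by (simp add: power_mult_distrib nA_sq)
  then show ?thesis using nA_nonneg by (meson mult_nonneg_nonneg power2_le_imp_le)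
qed

lemma nA_scaleC: "normA A (c *\<^sub>C x) = cmod c * normA A x"
proof -
  have "(normA A (c *\<^sub>C x))\<^sup>2 = Re (c * cnj c * innerA A x x)"
    by (simp only: nA_sq iA_scaleC_left iA_scaleC_right mult.assoc mult.left_commute)
  also have "\<dots> = Re (complex_of_real ((cmod c)\<^sup>2) * complex_of_real ((normA A x)\<^sup>2))"
    by (simp only: iA_self_nA complex_norm_square)
  also have "\<dots> = (cmod c * normA A x)\<^sup>2"
    by (simp del: of_real_power add: power_mult_distrib)
  finally show ?thesis using nA_nonneg
    by (metis abs_of_nonneg norm_ge_zero real_sqrt_abs zero_le_mult_iff)
qed

lemma nA_zero_imp: "normA A y = 0 \<Longrightarrow> A y = 0"
proof -
  assume h: "normA A y = 0"
  have "cmod (innerA A y (A y)) \<le> 0" using CS[of y "A y"] h by simp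
  then have "cinner (A y) (A y) = 0" by (simp add: innerA_def)
  then show ?thesis by (simp add: cinner_eq_zero_iff)
qed

lemma nA_diff_sq: "(normA A (x - y))\<^sup>2 = (normA A x)\<^sup>2 - 2 * Re (innerA A x y) + (normA A y)\<^sup>2"
proof -
  have "innerA A (x - y) (x - y) = innerA A x x - innerA A x y - innerA A y x + innerA A y y"
    by (simp add: iA_simps algebra_simps)
  then have "Re (innerA A (x - y) (x - y)) = Re (innerA A x x) - 2 * Re (innerA A x y) + Re (innerA A y y)"
    using iA_herm[of y x] by simp
  then show ?thesis by (simp add: nA_sq)
qed

lemma nA_add_sq: "(normA A (x + y))\<^sup>2 = (normA A x)\<^sup>2 + 2 * Re (innerA A x y) + (normA A y)\<^sup>2"
proof -
  have "innerA A (x + y) (x + y) = innerA A x x + innerA A x y + innerA A y x + innerA A y y"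
    by (simp add: iA_simps algebra_simps)
  then have "Re (innerA A (x + y) (x + y)) = Re (innerA A x x) + 2 * Re (innerA A x y) + Re (innerA A y y)"
    using iA_herm[of y x] by simp
  then show ?thesis by (simp add: nA_sq)
qed

end

lemma posop_id: "posop (\<lambda>x::'a::complex_inner. x)"
  unfolding posop_def positive_op_def
  by (metis bcl_id cinner_ge_zero cinner_self_real Reals_of_real)

lemma cinner_CS: "cmod (cinner x (y::'a::complex_inner)) \<le> norm x * norm y"
proof -
  have "cmod (innerA (\<lambda>x. x) x y) \<le> normA (\<lambda>x. x) x * normA (\<lambda>x. x) y"
    by (rule posop.CS[OF posop_id])
  then show ?thesis by (simp add: innerA_def normA_def norm_eq_sqrt_cinner)
qed

lemma norm_add_sq: "(norm (x + y::'a::complex_inner))\<^sup>2 = (norm x)\<^sup>2 + 2 * Re (cinner x y) + (norm y)\<^sup>2"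
  using posop.nA_add_sq[OF posop_id, of x y]
  by (simp add: normA_def innerA_def norm_eq_sqrt_cinner)

lemma norm_diff_sq: "(norm (x - y::'a::complex_inner))\<^sup>2 = (norm x)\<^sup>2 - 2 * Re (cinner x y) + (norm y)\<^sup>2"
  using posop.nA_diff_sq[OF posop_id, of x y]
  by (simp add: normA_def innerA_def norm_eq_sqrt_cinner)

section \<open>Orthogonal projection onto a closed subspace\<close>

lemma closest_point_exists:
  fixes M :: "'a::chilbert_space set" and x :: 'a
  assumes cl: "closed M" and z: "0 \<in> M" and ad: "\<And>u v. u\<in>M \<Longrightarrow> v\<in>M \<Longrightarrow> u+v \<in> M"
    and sc: "\<And>c u. u\<in>M \<Longrightarrow> c *\<^sub>C u \<in> M"
  shows "\<exists>p\<in>M. \<forall>m\<in>M. norm (x - p) \<le> norm (x - m)"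
proof -
  define D where "D = {norm (x - m) | m. m \<in> M}"
  define d where "d = Inf D"
  have Dne: "D \<noteq> {}" using z by (auto simp: D_def)
  have Dbb: "bdd_below D" by (auto simp: D_def bdd_below_def intro: exI[of _ 0])
  have dle: "d \<le> norm (x - m)" if "m \<in> M" for m
    unfolding d_def by (rule cInf_lower) (use that Dbb in \<open>auto simp: D_def\<close>)
  have d0: "0 \<le> d" unfolding d_def by (rule cInf_greatest[OF Dne]) (auto simp: D_def)
  define e where "e n = inverse (real (Suc n))" for n
  have epos: "0 < e n" for n by (simp add: e_def)
  have ele: "e n \<le> 1" for n by (simp add: e_def inverse_le_1_iff)
  have "\<forall>n. \<exists>m\<in>M. norm (x - m) < d + e n"
  proof
    fix n
    have "Inf D < d + e n" using epos[of n] by (simp add: d_def)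
    then obtain t where "t \<in> D" "t < d + e n" using cInf_lessD[OF Dne] by blast
    then show "\<exists>m\<in>M. norm (x - m) < d + e n" by (auto simp: D_def)
  qed
  then obtain f where f: "\<And>n. f n \<in> M" "\<And>n. norm (x - f n) < d + e n"
    by (metis choice_iff)
  have sqb: "(d + e n)\<^sup>2 \<le> d\<^sup>2 + (2*d+1) * e n" for n
  proof -
    have "(e n)\<^sup>2 \<le> e n" using epos[of n] ele[of n] by (simp add: power2_eq_square mult_le_cancel_right1)
    then show ?thesis by (simp add: power2_eq_square algebra_simps)
  qed
  have est: "(norm (f n - f k))\<^sup>2 \<le> 2*(2*d+1) * (e n + e k)" for n k
  proof -
    define a where "a = x - f n"
    define b where "b = x - f k"
    define mid where "mid = (1/2::real) *\<^sub>R (f n + f k)"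
    have midM: "mid \<in> M" unfolding mid_def scaleR_scaleC by (intro sc ad f)
    have "a + b = 2 *\<^sub>R (x - mid)" by (simp add: a_def b_def mid_def algebra_simps scaleR_2)
    then have nab: "norm (a + b) = 2 * norm (x - mid)" by simp
    have "2 * d \<le> norm (a + b)" using dle[OF midM] nab by simp
    then have nab2: "4 * d\<^sup>2 \<le> (norm (a + b))\<^sup>2" using d0
      by (metis (no_types, opaque_lifting) mult.commute mult_2_right power2_eq_square power_mono
          zero_le_mult_iff zero_le_numeral four_x_squared)
    have par: "(norm (a + b))\<^sup>2 + (norm (a - b))\<^sup>2 = 2 * (norm a)\<^sup>2 + 2 * (norm b)\<^sup>2"
      by (simp add: norm_add_sq norm_diff_sq)
    have "a - b = f k - f n" by (simp add: a_def b_def)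
    then have "(norm (a - b))\<^sup>2 = (norm (f n - f k))\<^sup>2" by (simp add: norm_minus_commute)
    moreover have "(norm a)\<^sup>2 \<le> (d + e n)\<^sup>2" using f(2)[of n] unfolding a_def
      by (intro power_mono) auto
    moreover have "(norm b)\<^sup>2 \<le> (d + e k)\<^sup>2" using f(2)[of k] unfolding b_def
      by (intro power_mono) auto
    ultimately have "(norm (f n - f k))\<^sup>2 \<le> 2 * (d + e n)\<^sup>2 + 2 * (d + e k)\<^sup>2 - 4 * d\<^sup>2"
      using par nab2 by linarith
    then show ?thesis using sqb[of n] sqb[of k] by (simp add: algebra_simps)
  qed
  have "Cauchy f"
  proof (rule CauchyI)
    fix r :: real assume r: "0 < r"
    obtain N :: nat where N: "4*(2*d+1) / r\<^sup>2 < real N"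
      using reals_Archimedean2 by blast
    have "norm (f m - f n) < r" if "m \<ge> N" "n \<ge> N" for m n
    proof -
      have em: "e m \<le> inverse (real (Suc N))" "e n \<le> inverse (real (Suc N))"
        using that by (auto simp: e_def intro!: le_imp_inverse_le)
      have "(norm (f m - f n))\<^sup>2 \<le> 2*(2*d+1) * (e m + e n)" by (rule est)
      also have "\<dots> \<le> 2*(2*d+1) * (2 * inverse (real (Suc N)))"
        using em d0 by (intro mult_left_mono) auto
      also have "\<dots> = 4*(2*d+1) / real (Suc N)" by (simp add: field_simps)
      also have "\<dots> < r\<^sup>2"
      proof -
        have "4*(2*d+1) < r\<^sup>2 * real N" using N r by (simp add: field_simps)
        also have "\<dots> \<le> r\<^sup>2 * real (Suc N)" by (simp add: mult_left_mono)
        finally show ?thesis by (simp add: field_simps)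
      qed
      finally show ?thesis using r by (meson abs_le_square_iff le_less_trans
          norm_ge_zero abs_of_nonneg power2_less_imp_less less_imp_le)
    qed
    then show "\<exists>M. \<forall>m\<ge>M. \<forall>n\<ge>M. norm (f m - f n) < r" by blast
  qed
  then obtain p where p: "f \<longlonglongrightarrow> p" using Cauchy_convergent_iff convergent_def by blast
  have pM: "p \<in> M" using closed_sequentially[OF cl f(1) p] .
  have "norm (x - p) \<le> d"
  proof (rule LIMSEQ_le)
    show "(\<lambda>n. norm (x - f n)) \<longlonglongrightarrow> norm (x - p)" by (intro tendsto_intros p)
    show "(\<lambda>n. d + e n) \<longlonglongrightarrow> d"
      using tendsto_add[OF tendsto_const LIMSEQ_inverse_real_of_nat] by (simp add: e_def)
    show "\<exists>N. \<forall>n\<ge>N. norm (x - f n) \<le> d + e n" using f(2) less_imp_le by blast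
  qed
  then show ?thesis using pM dle by (meson order_trans)
qed

lemma closest_point_orth:
  fixes M :: "'a::complex_inner set"
  assumes ad: "\<And>u v. u\<in>M \<Longrightarrow> v\<in>M \<Longrightarrow> u+v \<in> M"
    and sc: "\<And>c u. u\<in>M \<Longrightarrow> c *\<^sub>C u \<in> M"
    and pM: "p \<in> M" and mn: "\<forall>m\<in>M. norm (x - p) \<le> norm (x - m)"
    and mM: "m \<in> M"
  shows "cinner (x - p) m = 0"
proof (rule ccontr)
  define v where "v = x - p"
  define c where "c = cinner v m"
  assume "cinner (x - p) m \<noteq> 0"
  then have c0: "c \<noteq> 0" by (simp add: c_def v_def)
  define eps where "eps = 1 / ((norm m)\<^sup>2 + 1)"
  have np: "0 < (norm m)\<^sup>2 + 1" by (metis add_nonneg_pos zero_le_power2 zero_less_one)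
  have eps: "0 < eps" "eps * (norm m)\<^sup>2 < 1" using np by (auto simp: eps_def field_simps)
  define t where "t = complex_of_real eps * c"
  have "p + t *\<^sub>C m \<in> M" using pM mM by (intro ad sc)
  then have le: "norm v \<le> norm (v - t *\<^sub>C m)" using mn by (simp add: v_def algebra_simps)
  have ct: "cinner v (t *\<^sub>C m) = complex_of_real (eps * (cmod c)\<^sup>2)"
  proof -
    have "cinner v (t *\<^sub>C m) = complex_of_real eps * (c * cnj c)"
      by (simp add: cinner_scaleC_right t_def c_def[symmetric] algebra_simps)
    then show ?thesis by (simp only: complex_norm_square[symmetric] of_real_mult)
  qed
  have "(norm (v - t *\<^sub>C m))\<^sup>2 = (norm v)\<^sup>2 - 2 * (eps * (cmod c)\<^sup>2) + (cmod t * norm m)\<^sup>2"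
    by (simp add: norm_diff_sq ct norm_scaleC)
  also have "(cmod t * norm m)\<^sup>2 = eps * (cmod c)\<^sup>2 * (eps * (norm m)\<^sup>2)"
    using eps by (simp add: t_def norm_mult power_mult_distrib power2_eq_square)
  also have "eps * (cmod c)\<^sup>2 * (eps * (norm m)\<^sup>2) < eps * (cmod c)\<^sup>2 * 1"
    using eps c0 by (intro mult_strict_left_mono) auto
  finally have "(norm (v - t *\<^sub>C m))\<^sup>2 < (norm v)\<^sup>2 - eps * (cmod c)\<^sup>2" by simp
  also have "\<dots> < (norm v)\<^sup>2" using eps c0 by simp
  finally have "norm (v - t *\<^sub>C m) < norm v" by (simp add: power_less_imp_less_base)
  then show False using le by simp
qed

lemma proj_exists:
  fixes M :: "'a::chilbert_space set" and x :: 'a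
  assumes cl: "closed M" and z: "0 \<in> M" and ad: "\<And>u v. u\<in>M \<Longrightarrow> v\<in>M \<Longrightarrow> u+v \<in> M"
    and sc: "\<And>c u. u\<in>M \<Longrightarrow> c *\<^sub>C u \<in> M"
  shows "\<exists>p\<in>M. \<forall>m\<in>M. cinner (x - p) m = 0"
  using closest_point_exists[OF assms, of x] closest_point_orth[OF ad sc] by metis

lemma riesz:
  fixes f :: "'a::chilbert_space \<Rightarrow> complex"
  assumes fadd: "\<And>x y. f (x + y) = f x + f y" and fsc: "\<And>c x. f (c *\<^sub>C x) = c * f x"
    and fb: "\<And>x. norm (f x) \<le> norm x * K"
  shows "\<exists>z. \<forall>x. f x = cinner x z"
proof (cases "\<forall>x. f x = 0")
  case True
  then show ?thesis by (intro exI[of _ 0]) simp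
next
  case False
  then obtain u where u: "f u \<noteq> 0" by blast
  define N where "N = {x. f x = 0}"
  have fsR: "f (r *\<^sub>R x) = r *\<^sub>R f x" for r x
    by (metis fsc scaleC_of_real scaleR_conv_of_real)
  have bl: "bounded_linear f" by (rule bounded_linear_intro[where K=K]) (use fadd fsR fb in auto)
  have clN: "closed N" unfolding N_def
    by (rule closed_Collect_eq) (auto intro: linear_continuous_on bl)
  have f0: "f 0 = 0" using fsc[of 0 0] by simp
  have "\<exists>p\<in>N. \<forall>m\<in>N. cinner (u - p) m = 0"
    by (rule proj_exists[OF clN]) (auto simp: N_def f0 fadd fsc)
  then obtain p where pN: "p \<in> N" and orth: "\<And>m. m \<in> N \<Longrightarrow> cinner (u - p) m = 0" by blast
  define w where "w = u - p"
  have fw: "f w = f u"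
  proof -
    have "f w + f p = f u" using fadd[of w p] by (simp add: w_def)
    then show ?thesis using pN by (simp add: N_def)
  qed
  then have w0: "w \<noteq> 0" using u f0 by auto
  then have ww: "cinner w w \<noteq> 0" by (simp add: cinner_eq_zero_iff)
  have key: "f x = f w * cinner x w / cinner w w" for x
  proof -
    define y where "y = f x *\<^sub>C w - f w *\<^sub>C x"
    have "f y = 0"
    proof -
      have "f y + f (f w *\<^sub>C x) = f (f x *\<^sub>C w)" using fadd[of y "f w *\<^sub>C x"] by (simp add: y_def)
      then show ?thesis by (simp add: fsc mult.commute)
    qed
    then have "cinner w y = 0" using orth[of y] by (simp add: N_def w_def)
    then have "cinner y w = 0" by (metis cinner_commute complex_cnj_zero)
    then have "f x * cinner w w - f w * cinner x w = 0"
      by (simp add: y_def cinner_diff_left cinner_scaleC_left)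
    then have "f x * cinner w w = f w * cinner x w" by (simp only: right_minus_eq)
    then show ?thesis using ww by (simp add: eq_divide_eq)
  qed
  show ?thesis
  proof (intro exI allI)
    fix x
    show "f x = cinner x (cnj (f w / cinner w w) *\<^sub>C w)"
      unfolding cinner_scaleC_right complex_cnj_cnj using key[of x] by simp
  qed
qed

lemma adjoint_exists:
  fixes T :: "'a::chilbert_space \<Rightarrow> 'a"
  assumes T: "bounded_clinear T"
  shows "\<exists>S. \<forall>x y. cinner (T x) y = cinner x (S y)"
proof -
  obtain K where K: "K > 0" "\<forall>x. norm (T x) \<le> norm x * K" using bcl_bound[OF T] by auto
  have "\<forall>y. \<exists>z. \<forall>x. cinner (T x) y = cinner x z"
  proof
    fix y
    show "\<exists>z. \<forall>x. cinner (T x) y = cinner x z"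
    proof (rule riesz[where K="K * norm y"])
      show "cinner (T (x + z)) y = cinner (T x) y + cinner (T z) y" for x z
        by (simp add: bcl_add[OF T] cinner_add_left)
      show "cinner (T (c *\<^sub>C x)) y = c * cinner (T x) y" for c x
        by (simp add: bcl_scaleC[OF T] cinner_scaleC_left)
      show "norm (cinner (T x) y) \<le> norm x * (K * norm y)" for x
      proof -
        have "norm (cinner (T x) y) \<le> norm (T x) * norm y" by (rule cinner_CS)
        also have "\<dots> \<le> (norm x * K) * norm y" using K by (intro mult_right_mono) auto
        finally show ?thesis by (simp add: mult.assoc)
      qed
    qed
  qed
  then show ?thesis by (metis choice_iff)
qed

lemma hadjoint_prop:
  fixes T :: "'a::chilbert_space \<Rightarrow> 'a"
  assumes T: "bounded_clinear T"
  shows "cinner (T x) y = cinner x (hadjoint T y)"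
proof -
  obtain S where S: "\<forall>x y. cinner (T x) y = cinner x (S y)" using adjoint_exists[OF T] by blast
  have "hadjoint T = S" unfolding hadjoint_def
  proof (rule the_equality)
    show "\<forall>x y. cinner (T x) y = cinner x (S y)" by (rule S)
    fix S' assume S': "\<forall>x y. cinner (T x) y = cinner x (S' y)"
    show "S' = S"
    proof
      fix y
      show "S' y = S y" by (rule cinner_eq_zero_all) (metis S S')
    qed
  qed
  then show ?thesis using S by simp
qed

lemma bounded_linear_scaleC: "bounded_linear (\<lambda>x::'a::complex_inner. c *\<^sub>C x)"
proof (rule bounded_linear_intro[where K="cmod c"])
  show "c *\<^sub>C (x + y) = c *\<^sub>C x + c *\<^sub>C y" for x y :: 'a by (rule scaleC_add_right)
  show "c *\<^sub>C (r *\<^sub>R x) = r *\<^sub>R (c *\<^sub>C x)" for r and x :: 'a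
    by (simp add: scaleR_scaleC scaleC_scaleC mult.commute)
  show "norm (c *\<^sub>C x) \<le> norm x * cmod c" for x :: 'a by (simp add: norm_scaleC mult.commute)
qed

lemma bounded_linear_cinner_left: "bounded_linear (\<lambda>v::'a::complex_inner. cinner v x)"
proof (rule bounded_linear_intro[where K="norm x"])
  show "cinner (u + v) x = cinner u x + cinner v x" for u v :: 'a by (rule cinner_add_left)
  show "cinner (r *\<^sub>R v) x = r *\<^sub>R cinner v x" for r and v :: 'a
    by (simp add: scaleR_scaleC cinner_scaleC_left scaleR_conv_of_real)
  show "norm (cinner v x) \<le> norm v * norm x" for v :: 'a by (rule cinner_CS)
qed

locale posH =
  fixes A :: "'a::chilbert_space \<Rightarrow> 'a"
  assumes posH: "positive_op A"
begin

sublocale posop A by unfold_locales (rule posH)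

abbreviation "M \<equiv> closure (range A)"

lemma M_closed: "closed M" by simp
lemma M_range: "A y \<in> M" by (simp add: closure_subset[THEN subsetD])
lemma M_zero: "0 \<in> M" using M_range[of 0] bcl_zero[OF lin] by simp

lemma M_add: assumes "x \<in> M" "y \<in> M" shows "x + y \<in> M"
proof -
  obtain f where f: "\<And>n. f n \<in> range A" "f \<longlonglongrightarrow> x" using assms(1) unfolding closure_sequential by blast
  obtain g where g: "\<And>n. g n \<in> range A" "g \<longlonglongrightarrow> y" using assms(2) unfolding closure_sequential by blast
  have "\<And>n. f n + g n \<in> range A"
  proof -
    fix n
    obtain a b where "f n = A a" "g n = A b" using f(1) g(1) by blast
    then have "f n + g n = A (a + b)" by (simp add: bcl_add[OF lin])
    then show "f n + g n \<in> range A" by blast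
  qed
  moreover have "(\<lambda>n. f n + g n) \<longlonglongrightarrow> x + y" by (intro tendsto_intros f g)
  ultimately show ?thesis
    by (intro closure_sequential[THEN iffD2] exI[of _ "\<lambda>n. f n + g n"]) simp
qed

lemma M_scaleC: assumes "x \<in> M" shows "c *\<^sub>C x \<in> M"
proof -
  have "(\<lambda>x. c *\<^sub>C x) ` M \<subseteq> closure ((\<lambda>x. c *\<^sub>C x) ` range A)"
    by (rule closure_bounded_linear_image_subset[OF bounded_linear_scaleC])
  also have "\<dots> \<subseteq> M"
  proof (rule closure_mono)
    show "(\<lambda>x. c *\<^sub>C x) ` range A \<subseteq> range A" by (auto simp: bcl_scaleC[OF lin, symmetric])
  qed
  finally show ?thesis using assms by blast
qed

lemma M_diff: assumes "x \<in> M" "y \<in> M" shows "x - y \<in> M"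
proof -
  have "x + (-1) *\<^sub>C y \<in> M" by (intro M_add M_scaleC assms)
  then show ?thesis by (simp add: minus_one_scaleC)
qed

lemma M_null: assumes "x \<in> M" "A x = 0" shows "x = 0"
proof -
  have "M \<subseteq> {v. cinner v x = 0}"
  proof (rule closure_minimal)
    show "range A \<subseteq> {v. cinner v x = 0}" using assms(2) by (auto simp: sa)
    show "closed {v. cinner v x = 0}"
      by (rule closed_Collect_eq) (auto intro: linear_continuous_on bounded_linear_cinner_left)
  qed
  then have "cinner x x = 0" using assms(1) by blast
  then show ?thesis by (simp add: cinner_eq_zero_iff)
qed

definition P :: "'a \<Rightarrow> 'a" where
  "P x = (SOME p. p \<in> M \<and> (\<forall>m\<in>M. cinner (x - p) m = 0))"

lemma P_prop: "P x \<in> M \<and> (\<forall>m\<in>M. cinner (x - P x) m = 0)"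
proof -
  have "\<exists>p\<in>M. \<forall>m\<in>M. cinner (x - p) m = 0"
    by (rule proj_exists) (auto intro: M_zero M_add M_scaleC)
  then show ?thesis unfolding P_def by (rule someI2_bex) blast
qed

lemma P_M: "P x \<in> M" using P_prop by blast
lemma P_orth: "m \<in> M \<Longrightarrow> cinner (x - P x) m = 0" using P_prop by blast

lemma P_unique: assumes "p \<in> M" "\<And>m. m \<in> M \<Longrightarrow> cinner (x - p) m = 0" shows "P x = p"
proof -
  have d: "P x - p \<in> M" by (intro M_diff P_M assms)
  have "cinner (P x - p) m = cinner (x - p) m - cinner (x - P x) m" for m
    by (simp add: cinner_diff_left)
  then have "cinner (P x - p) (P x - p) = 0" using assms(2)[OF d] P_orth[OF d] by simp
  then show ?thesis by (simp add: cinner_eq_zero_iff)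
qed

lemma A_P: "A (P x) = A x"
proof -
  have "cinner (A (x - P x)) v = 0" for v
    using P_orth[OF M_range[of v]] by (simp add: sa)
  then have "A (x - P x) = 0" by (metis cinner_eq_zero_iff)
  then show ?thesis by (simp add: bcl_diff[OF lin])
qed

lemma P_bcl: "bounded_clinear P"
proof -
  have padd: "P (x + y) = P x + P y" for x y
  proof (rule P_unique)
    show "P x + P y \<in> M" by (intro M_add P_M)
    show "cinner (x + y - (P x + P y)) m = 0" if "m \<in> M" for m
    proof -
      have e: "x + y - (P x + P y) = (x - P x) + (y - P y)" by (simp add: algebra_simps)
      show ?thesis unfolding e cinner_add_left using P_orth[OF that, of x] P_orth[OF that, of y] by simp
    qed
  qed
  have psc: "P (c *\<^sub>C x) = c *\<^sub>C P x" for c x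
  proof (rule P_unique)
    show "c *\<^sub>C P x \<in> M" by (intro M_scaleC P_M)
    show "cinner (c *\<^sub>C x - c *\<^sub>C P x) m = 0" if "m \<in> M" for m
      using P_orth[OF that, of x] by (simp add: scaleC_diff_right[symmetric] cinner_scaleC_left)
  qed
  have pb: "norm (P x) \<le> norm x * 1" for x
  proof -
    have o: "cinner (P x) (x - P x) = 0"
      using P_orth[OF P_M, of x x] by (metis cinner_commute complex_cnj_zero)
    have "(norm (P x + (x - P x)))\<^sup>2 = (norm (P x))\<^sup>2 + 2 * Re (cinner (P x) (x - P x)) + (norm (x - P x))\<^sup>2"
      by (rule norm_add_sq)
    then have "(norm x)\<^sup>2 = (norm (P x))\<^sup>2 + (norm (x - P x))\<^sup>2" using o by simp
    then have "(norm (P x))\<^sup>2 \<le> (norm x)\<^sup>2" by simp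
    then show ?thesis using power2_le_imp_le[OF _ norm_ge_zero] by simp
  qed
  show ?thesis unfolding bounded_clinear_def using padd psc pb by blast
qed

section \<open>The reduced solution\<close>

context
  fixes T :: "'a \<Rightarrow> 'a"
  assumes TBA: "T \<in> BA A"
begin

lemma T_bcl: "bounded_clinear T" using TBA by (simp add: BA_def)

lemma sharp_props:
  "bounded_clinear (sharpA A T) \<and> (\<forall>x y. innerA A (T x) y = innerA A x (sharpA A T y))
    \<and> (\<forall>y. sharpA A T y \<in> M)"
proof -
  obtain W where W: "bounded_clinear W" "is_A_adjoint A T W" using TBA by (auto simp: BA_def)
  have Wadj: "cinner (A (T x)) y = cinner (A x) (W y)" for x y
    using W(2) by (simp add: is_A_adjoint_def innerA_def)
  have AW: "A (W y) = hadjoint T (A y)" for y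
  proof (rule cinner_eq_zero_all)
    fix z
    have "cinner z (A (W y)) = cinner (A z) (W y)" by (simp add: sa)
    also have "\<dots> = cinner (A (T z)) y" by (simp add: Wadj)
    also have "\<dots> = cinner (T z) (A y)" by (simp add: sa)
    also have "\<dots> = cinner z (hadjoint T (A y))" by (rule hadjoint_prop[OF T_bcl])
    finally show "cinner z (A (W y)) = cinner z (hadjoint T (A y))" .
  qed
  define X where "X y = P (W y)" for y
  have Xp: "bounded_clinear X \<and> A \<circ> X = hadjoint T \<circ> A \<and> range X \<subseteq> M"
    using bcl_comp[OF P_bcl W(1)] by (auto simp: X_def[abs_def] A_P AW P_M)
  have "sharpA A T = X" unfolding sharpA_def
  proof (rule the_equality)
    show "bounded_clinear X \<and> A \<circ> X = hadjoint T \<circ> A \<and> range X \<subseteq> M" by (rule Xp)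
    fix Y assume Y: "bounded_clinear Y \<and> A \<circ> Y = hadjoint T \<circ> A \<and> range Y \<subseteq> M"
    show "Y = X"
    proof
      fix y
      have "A (Y y) = A (X y)" using Y Xp by (metis comp_apply)
      then have "A (Y y - X y) = 0" by (simp add: bcl_diff[OF lin])
      moreover have "Y y - X y \<in> M" using Y Xp by (intro M_diff) auto
      ultimately have "Y y - X y = 0" by (rule M_null[rotated])
      then show "Y y = X y" by simp
    qed
  qed
  moreover have "innerA A (T x) y = innerA A x (X y)" for x y
  proof -
    have "innerA A x (X y) = cinner x (A (P (W y)))" by (simp add: innerA_def sa X_def)
    also have "\<dots> = cinner (A x) (W y)" by (simp add: A_P sa)
    finally show ?thesis by (simp add: innerA_def Wadj)
  qed
  ultimately show ?thesis using Xp by auto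
qed

end
end

context posH
begin

lemma nA_le_norm: "\<exists>L>0. \<forall>y. normA A y \<le> L * norm y"
proof -
  obtain K where K: "K > 0" "\<forall>x. norm (A x) \<le> norm x * K" using bcl_bound[OF lin] by auto
  have "normA A y \<le> sqrt K * norm y" for y
  proof -
    have "(normA A y)\<^sup>2 = Re (cinner (A y) y)" by (simp add: nA_sq innerA_def)
    also have "\<dots> \<le> cmod (cinner (A y) y)" by (rule complex_Re_le_cmod)
    also have "\<dots> \<le> norm (A y) * norm y" by (rule cinner_CS)
    also have "\<dots> \<le> (norm y * K) * norm y" using K by (intro mult_right_mono) auto
    also have "\<dots> = (sqrt K * norm y)\<^sup>2" using K by (simp add: power2_eq_square)
    finally show ?thesis using K by (meson power2_le_imp_le real_sqrt_ge_zero norm_ge_zero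
          mult_nonneg_nonneg less_imp_le)
  qed
  then show ?thesis using K by (intro exI[of _ "sqrt K"]) auto
qed

lemma funpow_norm:
  fixes R :: "'a \<Rightarrow> 'a"
  assumes "\<forall>x. norm (R x) \<le> norm x * K" "0 \<le> K"
  shows "norm ((R ^^ n) x) \<le> K ^ n * norm x"
proof (induction n)
  case 0 then show ?case by (simp add: funpow_0)
next
  case (Suc n)
  have "norm ((R ^^ Suc n) x) = norm (R ((R ^^ n) x))" by simp
  also have "\<dots> \<le> norm ((R ^^ n) x) * K" using assms by auto
  also have "\<dots> \<le> (K ^ n * norm x) * K" using Suc assms(2) by (intro mult_right_mono) auto
  finally show ?case by (simp add: algebra_simps)
qed

lemma funpow_sa:
  fixes R :: "'a \<Rightarrow> 'a"
  assumes "\<forall>u v. innerA A (R u) v = innerA A u (R v)"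
  shows "innerA A ((R ^^ n) u) v = innerA A u ((R ^^ n) v)"
proof (induction n arbitrary: v)
  case 0 then show ?case by simp
next
  case (Suc n)
  have "innerA A ((R ^^ Suc n) u) v = innerA A (R ((R ^^ n) u)) v" by simp
  also have "\<dots> = innerA A ((R ^^ n) u) (R v)" using assms by simp
  also have "\<dots> = innerA A u ((R ^^ n) (R v))" by (rule Suc)
  also have "\<dots> = innerA A u ((R ^^ Suc n) v)" by (simp add: funpow_swap1)
  finally show ?case .
qed

lemma sq_le_next:
  assumes sa: "\<forall>u v. innerA A (R u) v = innerA A u (R v)"
  shows "(normA A (R z))\<^sup>2 \<le> normA A (R (R z)) * normA A z"
proof -
  have "(normA A (R z))\<^sup>2 = Re (innerA A (R (R z)) z)"
    by (simp add: nA_sq sa)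
  also have "\<dots> \<le> cmod (innerA A (R (R z)) z)" by (rule complex_Re_le_cmod)
  also have "\<dots> \<le> normA A (R (R z)) * normA A z" by (rule CS)
  finally show ?thesis .
qed

lemma A_bounded_sa:
  assumes R: "bounded_clinear R" and sa: "\<forall>u v. innerA A (R u) v = innerA A u (R v)"
  shows "\<exists>C\<ge>0. \<forall>x. normA A (R x) \<le> C * normA A x"
proof -
  obtain K where K: "K > 0" "\<forall>x. norm (R x) \<le> norm x * K" using bcl_bound[OF R] by auto
  obtain L where L: "L > 0" "\<forall>y. normA A y \<le> L * norm y" using nA_le_norm by auto
  have unit: "normA A (R x) \<le> K" if x1: "normA A x = 1" for x
  proof (rule ccontr)
    assume "\<not> normA A (R x) \<le> K"
    then have gt: "normA A (R x) > K" by simp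
    define b where "b k = normA A ((R ^^ (2^k)) x)" for k :: nat
    have b0: "b 0 = normA A (R x)" by (simp add: b_def)
    have bsq: "(b k)\<^sup>2 \<le> b (Suc k)" for k
    proof -
      have sak: "\<forall>u v. innerA A ((R ^^ (2^k)) u) v = innerA A u ((R ^^ (2^k)) v)"
        using funpow_sa[OF sa] by blast
      have "(b k)\<^sup>2 \<le> normA A ((R ^^ (2^k)) ((R ^^ (2^k)) x)) * normA A x"
        unfolding b_def by (rule sq_le_next[OF sak])
      also have "(R ^^ (2^k)) ((R ^^ (2^k)) x) = (R ^^ (2^Suc k)) x"
        by (simp only: power_Suc mult_2 funpow_add comp_apply)
      finally show ?thesis by (simp add: x1 b_def)
    qed
    have bn: "(b 0) ^ (2^n) \<le> b n" for n
    proof (induction n)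
      case 0 then show ?case by simp
    next
      case (Suc n)
      have "(b 0) ^ (2^Suc n) = ((b 0) ^ (2^n))\<^sup>2" by (simp add: power_mult[symmetric] mult.commute)
      also have "\<dots> \<le> (b n)\<^sup>2" using Suc b0 nA_nonneg by (intro power_mono) auto
      also have "\<dots> \<le> b (Suc n)" by (rule bsq)
      finally show ?case .
    qed
    have bup: "b n \<le> L * (K ^ (2^n) * norm x)" for n
    proof -
      have "b n \<le> L * norm ((R ^^ (2^n)) x)" unfolding b_def using L by auto
      also have "\<dots> \<le> L * (K ^ (2^n) * norm x)"
        using funpow_norm[OF K(2)] K L by (intro mult_left_mono) auto
      finally show ?thesis .
    qed
    define r where "r = b 0 / K"
    have r1: "1 < r" using gt K b0 by (simp add: r_def field_simps)
    obtain n where n: "L * norm x < r ^ n" using real_arch_pow[OF r1] by blast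
    have "r ^ n \<le> r ^ (2^n)" using r1 by (intro power_increasing) (auto intro: less_imp_le
          simp: less_exp)
    also have "r ^ (2^n) = (b 0) ^ (2^n) / K ^ (2^n)" by (simp add: r_def power_divide)
    also have "\<dots> \<le> L * (K ^ (2^n) * norm x) / K ^ (2^n)"
      using bn[of n] bup[of n] K by (intro divide_right_mono) auto
    also have "\<dots> = L * norm x" using K by simp
    finally show False using n by simp
  qed
  have "normA A (R x) \<le> K * normA A x" for x
  proof (cases "normA A x = 0")
    case True
    have "(normA A (R x))\<^sup>2 \<le> normA A (R (R x)) * normA A x" by (rule sq_le_next[OF sa])
    then have "normA A (R x) = 0" using True by simp
    then show ?thesis using True by simp
  next
    case False
    then have a: "normA A x > 0" using nA_nonneg[of x] by simp
    define x' where "x' = complex_of_real (1 / normA A x) *\<^sub>C x"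
    have "normA A x' = 1" using a by (simp add: x'_def nA_scaleC norm_divide)
    then have "normA A (R x') \<le> K" by (rule unit)
    moreover have "normA A (R x') = normA A (R x) / normA A x"
      using a by (simp add: x'_def bcl_scaleC[OF R] nA_scaleC norm_divide)
    ultimately show ?thesis using a by (simp add: field_simps)
  qed
  then show ?thesis using K by (intro exI[of _ K]) auto
qed

end

context posH
begin

lemma sa_bound:
  fixes R :: "'a \<Rightarrow> 'a"
  assumes Radd: "\<forall>u v. R (u + v) = R u + R v" and Rsc: "\<forall>c u. R (c *\<^sub>C u) = c *\<^sub>C R u"
    and sa: "\<forall>u v. innerA A (R u) v = innerA A u (R v)" and w0: "0 \<le> w"
    and bd: "\<forall>u. cmod (innerA A (R u) u) \<le> w * (normA A u)\<^sup>2"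
  shows "normA A (R z) \<le> w * normA A z"
proof -
  have Rdiff: "R (u - v) = R u - R v" for u v
  proof -
    have "R (u + (-1) *\<^sub>C v) = R u + (-1) *\<^sub>C R v" using Radd Rsc by simp
    then show ?thesis by (simp add: minus_one_scaleC)
  qed
  have par: "4 * Re (innerA A (R z) v) \<le> 2 * w * ((normA A z)\<^sup>2 + (normA A v)\<^sup>2)" for v
  proof -
    have e1: "innerA A (R (z + v)) (z + v) = innerA A (R z) z + innerA A (R z) v + innerA A (R v) z + innerA A (R v) v"
      by (simp add: Radd iA_add_left iA_add_right)
    have e2: "innerA A (R (z - v)) (z - v) = innerA A (R z) z - innerA A (R z) v - innerA A (R v) z + innerA A (R v) v"
      by (simp add: Rdiff iA_diff_left iA_diff_right)
    have e3: "innerA A (R v) z = cnj (innerA A (R z) v)"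
      using sa iA_herm by metis
    have "4 * Re (innerA A (R z) v) = Re (innerA A (R (z + v)) (z + v)) - Re (innerA A (R (z - v)) (z - v))"
      unfolding e1 e2 e3 by simp
    also have "\<dots> \<le> cmod (innerA A (R (z + v)) (z + v)) + cmod (innerA A (R (z - v)) (z - v))"
      using abs_Re_le_cmod[of "innerA A (R (z + v)) (z + v)"] abs_Re_le_cmod[of "innerA A (R (z - v)) (z - v)"]
      by linarith
    also have "\<dots> \<le> w * (normA A (z + v))\<^sup>2 + w * (normA A (z - v))\<^sup>2"
      using bd by (intro add_mono) auto
    also have "\<dots> = w * ((normA A (z + v))\<^sup>2 + (normA A (z - v))\<^sup>2)"
      by (simp add: algebra_simps)
    also have "(normA A (z + v))\<^sup>2 + (normA A (z - v))\<^sup>2 = 2 * ((normA A z)\<^sup>2 + (normA A v)\<^sup>2)"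
      unfolding nA_add_sq nA_diff_sq by simp
    also have "w * (2 * ((normA A z)\<^sup>2 + (normA A v)\<^sup>2)) = 2 * w * ((normA A z)\<^sup>2 + (normA A v)\<^sup>2)"
      by simp
    finally show ?thesis .
  qed
  define a where "a = normA A z"
  define b where "b = normA A (R z)"
  have a0: "0 \<le> a" and b0: "0 \<le> b" by (simp_all add: a_def b_def nA_nonneg)
  have tv: "4 * t * b\<^sup>2 \<le> 2 * w * (a\<^sup>2 + t\<^sup>2 * b\<^sup>2)" if "0 \<le> t" for t
  proof -
    have i1: "innerA A (R z) (complex_of_real t *\<^sub>C R z) = complex_of_real (t * b\<^sup>2)"
      by (simp add: iA_scaleC_right b_def iA_self_nA)
    have n1: "normA A (complex_of_real t *\<^sub>C R z) = t * b"
      using that by (simp add: nA_scaleC b_def)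
    show ?thesis using par[of "complex_of_real t *\<^sub>C R z"] unfolding i1 n1 a_def[symmetric]
      by (simp add: power_mult_distrib mult.assoc)
  qed
  show ?thesis
  proof (cases "b = 0")
    case True then show ?thesis using w0 a0 by (simp add: b_def a_def)
  next
    case False
    then have bp: "b > 0" using b0 by simp
    show ?thesis
    proof (cases "a = 0")
      case True
      have "4 * (1/(w+1)) * b\<^sup>2 \<le> 2 * w * (a\<^sup>2 + (1/(w+1))\<^sup>2 * b\<^sup>2)" using w0 by (intro tv) auto
      then have h1: "4 * ((1/(w+1)) * b\<^sup>2) \<le> (2 * w / (w+1)) * ((1/(w+1)) * b\<^sup>2)"
        using True by (simp add: power2_eq_square algebra_simps)
      have "2 * w / (w+1) < 4" using w0 by (simp add: field_simps)
      moreover have "0 < (1/(w+1)) * b\<^sup>2" using w0 bp by simp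
      ultimately have "(2 * w / (w+1)) * ((1/(w+1)) * b\<^sup>2) < 4 * ((1/(w+1)) * b\<^sup>2)"
        by (rule mult_strict_right_mono)
      then show ?thesis using h1 by linarith
    next
      case False
      then have ap: "a > 0" using a0 by simp
      have "4 * (a/b) * b\<^sup>2 \<le> 2 * w * (a\<^sup>2 + (a/b)\<^sup>2 * b\<^sup>2)" using ap bp by (intro tv) auto
      then have "4 * (a * b) \<le> 4 * (w * a * a)" using bp by (simp add: power2_eq_square field_simps)
      then have "a * b \<le> a * (w * a)" by (simp add: algebra_simps)
      then have "b \<le> w * a" using ap by simp
      then show ?thesis by (simp add: a_def b_def)
    qed
  qed
qed

lemma exists_orth:
  assumes dim: "dim_range_ge2 A" and u1: "normA A u = 1"
  shows "\<exists>z. normA A z = 1 \<and> innerA A u z = 0"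
proof -
  obtain a1 a2 where indep: "\<forall>a b. a *\<^sub>C A a1 + b *\<^sub>C A a2 = 0 \<longrightarrow> a = 0 \<and> b = 0"
    using dim unfolding dim_range_ge2_def by blast
  have uu: "innerA A u u = 1" using u1 by (simp add: iA_self_nA)
  define po where "po w = w - innerA A w u *\<^sub>C u" for w
  have po_orth: "innerA A u (po w) = 0" for w
    by (simp add: po_def iA_diff_right iA_scaleC_right uu iA_herm[of w u])
  have "\<exists>w. normA A (po w) \<noteq> 0"
  proof (rule ccontr)
    assume "\<not> (\<exists>w. normA A (po w) \<noteq> 0)"
    then have z: "A (po w) = 0" for w using nA_zero_imp by blast
    have Aw: "A w = innerA A w u *\<^sub>C A u" for w
      using z[of w] by (simp add: po_def bcl_diff[OF lin] bcl_scaleC[OF lin])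
    define c1 where "c1 = innerA A (A a1) u"
    define c2 where "c2 = innerA A (A a2) u"
    have "A (c2 *\<^sub>C A a1 - c1 *\<^sub>C A a2) = 0"
      by (simp add: bcl_diff[OF lin] bcl_scaleC[OF lin] Aw[of "A a1"] Aw[of "A a2"] c1_def c2_def
          scaleC_scaleC mult.commute)
    moreover have "c2 *\<^sub>C A a1 - c1 *\<^sub>C A a2 \<in> M" by (intro M_diff M_scaleC M_range)
    ultimately have "c2 *\<^sub>C A a1 - c1 *\<^sub>C A a2 = 0" using M_null by blast
    then have "c2 *\<^sub>C A a1 + (- c1) *\<^sub>C A a2 = 0" by (simp add: scaleC_minus_left)
    then have "c2 = 0 \<and> c1 = 0" using indep by fastforce
    then have "A (A a1) = 0" using Aw[of "A a1"] by (simp add: c1_def)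
    then have "A a1 = 0" using M_null M_range by blast
    then have "1 *\<^sub>C A a1 + 0 *\<^sub>C A a2 = 0" by simp
    then show False using indep by fastforce
  qed
  then obtain w where w: "normA A (po w) \<noteq> 0" by blast
  define z where "z = complex_of_real (1 / normA A (po w)) *\<^sub>C po w"
  have "normA A z = 1" using w nA_nonneg[of "po w"] by (simp add: z_def nA_scaleC norm_divide)
  moreover have "innerA A u z = 0" by (simp add: z_def iA_scaleC_right po_orth)
  ultimately show ?thesis by blast
qed

lemma exists_unit:
  assumes dim: "dim_range_ge2 A"
  shows "\<exists>u. normA A u = 1"
proof -
  obtain a1 a2 where indep: "\<forall>a b. a *\<^sub>C A a1 + b *\<^sub>C A a2 = 0 \<longrightarrow> a = 0 \<and> b = 0"
    using dim unfolding dim_range_ge2_def by blast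
  have "A a1 \<noteq> 0"
  proof
    assume "A a1 = 0"
    then have "1 *\<^sub>C A a1 + 0 *\<^sub>C A a2 = 0" by simp
    then show False using indep by fastforce
  qed
  then have n: "normA A (A a1) \<noteq> 0" using M_null M_range nA_zero_imp by blast
  define u where "u = complex_of_real (1 / normA A (A a1)) *\<^sub>C A a1"
  have "normA A u = 1" using n nA_nonneg[of "A a1"] by (simp add: u_def nA_scaleC norm_divide)
  then show ?thesis by blast
qed

lemma exists_nonzero_M:
  assumes dim: "dim_range_ge2 A"
  shows "\<exists>p\<in>M. p \<noteq> 0"
proof -
  obtain a1 a2 where indep: "\<forall>a b. a *\<^sub>C A a1 + b *\<^sub>C A a2 = 0 \<longrightarrow> a = 0 \<and> b = 0"
    using dim unfolding dim_range_ge2_def by blast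
  have "A a1 \<noteq> 0"
  proof
    assume "A a1 = 0"
    then have "1 *\<^sub>C A a1 + 0 *\<^sub>C A a2 = 0" by simp
    then show False using indep by fastforce
  qed
  then show ?thesis using M_range by blast
qed

end

lemma arith_upper:
  fixes qa s m a b N X :: real
  assumes "0 \<le> qa" "0 \<le> s" "s\<^sup>2 = 1 - qa\<^sup>2" "0 \<le> m" "m \<le> a" "m \<le> b" "a\<^sup>2 + b\<^sup>2 \<le> N"
    "X \<le> qa * m + s * a" "0 \<le> X"
  shows "X\<^sup>2 \<le> (2 - qa\<^sup>2 + 4 * qa * s) / 2 * N"
proof -
  have a0: "0 \<le> a" using assms by linarith
  have b0: "0 \<le> b" using assms by linarith
  have "X\<^sup>2 \<le> (qa * m + s * a)\<^sup>2" using assms by (intro power_mono) auto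
  also have "\<dots> = qa\<^sup>2 * (m * m) + 2 * qa * s * (m * a) + s\<^sup>2 * a\<^sup>2"
    by (simp add: power2_eq_square algebra_simps)
  also have "\<dots> \<le> qa\<^sup>2 * (N / 2) + 2 * qa * s * N + s\<^sup>2 * N"
  proof -
    have "m * m \<le> a * b" using assms by (intro mult_mono) auto
    also have "a * b \<le> (a\<^sup>2 + b\<^sup>2) / 2" using sum_squares_bound[of a b] by (simp add: algebra_simps)
    also have "(a\<^sup>2 + b\<^sup>2) / 2 \<le> N / 2" using assms(7) by (simp add: divide_right_mono)
    finally have mm: "m * m \<le> N / 2" .
    have "m * a \<le> a * a" using assms a0 by (intro mult_right_mono) auto
    then have ma: "m * a \<le> N" using assms b0 by (simp add: power2_eq_square)
      (smt (verit) zero_le_mult_iff)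
    have aa: "a\<^sup>2 \<le> N" using assms by (smt (verit) zero_le_power2)
    have "qa\<^sup>2 \<le> 1" using assms(3) zero_le_power2[of s] by linarith
    then show ?thesis using assms
      by (intro add_mono mult_left_mono mm ma aa) (auto intro: mult_nonneg_nonneg)
  qed
  also have "\<dots> = (2 - qa\<^sup>2 + 4 * qa * s) / 2 * N" unfolding assms(3) by (simp add: field_simps)
  finally show ?thesis .
qed

context posH
begin

context
  fixes T :: "'a \<Rightarrow> 'a"
  assumes TBA: "T \<in> BA A"
begin

abbreviation "Ts \<equiv> sharpA A T"

lemma Tbcl: "bounded_clinear T" by (rule T_bcl[OF TBA])
lemma Tsbcl: "bounded_clinear Ts" using sharp_props[OF TBA] by blast
lemma adj1: "innerA A (T x) y = innerA A x (Ts y)" using sharp_props[OF TBA] by blast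
lemma adj2: "innerA A (Ts x) y = innerA A x (T y)"
  by (metis adj1 iA_herm)

abbreviation "Sop \<equiv> \<lambda>x. Ts (T x) + T (Ts x)"

lemma S_bcl: "bounded_clinear Sop"
  using bcl_plus[OF bcl_comp[OF Tsbcl Tbcl] bcl_comp[OF Tbcl Tsbcl]] .

lemma S_sa: "innerA A (Sop u) v = innerA A u (Sop v)"
  by (simp add: iA_add_left iA_add_right adj1 adj2)

lemma S_bounded: "\<exists>C\<ge>0. \<forall>x. normA A (Sop x) \<le> C * normA A x"
  by (rule A_bounded_sa[OF S_bcl]) (simp add: S_sa)

lemma T_bounded: "\<exists>C\<ge>0. \<forall>x. normA A (T x) \<le> C * normA A x"
proof -
  have "\<exists>C\<ge>0. \<forall>x. normA A (Ts (T x)) \<le> C * normA A x"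
    by (rule A_bounded_sa[OF bcl_comp[OF Tsbcl Tbcl]]) (simp add: adj1 adj2)
  then obtain C where C: "C \<ge> 0" "\<forall>x. normA A (Ts (T x)) \<le> C * normA A x" by blast
  have "normA A (T x) \<le> sqrt C * normA A x" for x
  proof -
    have "(normA A (T x))\<^sup>2 = Re (innerA A x (Ts (T x)))" by (simp add: nA_sq adj1)
    also have "\<dots> \<le> cmod (innerA A x (Ts (T x)))" by (rule complex_Re_le_cmod)
    also have "\<dots> \<le> normA A x * normA A (Ts (T x))" by (rule CS)
    also have "\<dots> \<le> normA A x * (C * normA A x)" using C nA_nonneg by (intro mult_left_mono) auto
    also have "\<dots> = (sqrt C * normA A x)\<^sup>2" using C by (simp add: power2_eq_square)
    finally show ?thesis using C nA_nonneg[of x] by (meson power2_le_imp_le real_sqrt_ge_zero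
          mult_nonneg_nonneg)
  qed
  then show ?thesis using C by (intro exI[of _ "sqrt C"]) auto
qed

lemma nA_pos_M: "x \<in> M \<Longrightarrow> x \<noteq> 0 \<Longrightarrow> normA A x > 0"
  using M_null nA_zero_imp nA_nonneg by (metis less_eq_real_def)

lemma O_bdd: "bdd_above {normA A (Sop x) / normA A x | x. x \<in> M \<and> x \<noteq> 0}"
proof -
  obtain C where C: "C \<ge> 0" "\<forall>x. normA A (Sop x) \<le> C * normA A x" using S_bounded by blast
  have "normA A (Sop x) / normA A x \<le> C" if "x \<in> M" "x \<noteq> 0" for x
    using nA_pos_M[OF that] C by (simp add: divide_le_eq)
  then show ?thesis unfolding bdd_above_def by blast
qed

lemma S_le_N: assumes "p \<in> M" shows "normA A (Sop p) \<le> opnormA A Sop * normA A p"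
proof (cases "p = 0")
  case True
  have "Sop 0 = 0" using bcl_zero[OF S_bcl] .
  then show ?thesis using True by (simp add: normA_def)
next
  case False
  have "normA A (Sop p) / normA A p \<le> opnormA A Sop"
    unfolding opnormA_def by (rule cSup_upper) (use assms False O_bdd in auto)
  then show ?thesis using nA_pos_M[OF assms False] by (simp add: divide_le_eq mult.commute)
qed

lemma nA_P: "normA A (P x) = normA A x"
proof -
  have "innerA A (P x) (P x) = cnj (innerA A x x)"
    by (metis A_P cinner_commute innerA_def sa)
  then show ?thesis unfolding normA_def by simp
qed

lemma key_ab: "(normA A (T x))\<^sup>2 + (normA A (Ts x))\<^sup>2 \<le> opnormA A Sop * (normA A x)\<^sup>2"
proof -
  have e1: "innerA A (Sop x) x = innerA A (T x) (T x) + innerA A (Ts x) (Ts x)"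
    by (simp add: iA_add_left adj1 adj2)
  have e2: "innerA A (Sop x) x = innerA A (P x) (Sop (P x))"
  proof -
    have "innerA A (Sop x) x = cinner (Sop x) (A (P x))" by (simp add: innerA_def sa A_P)
    also have "\<dots> = innerA A (Sop x) (P x)" by (simp add: innerA_def sa)
    also have "\<dots> = innerA A x (Sop (P x))" by (rule S_sa)
    also have "\<dots> = innerA A (P x) (Sop (P x))" by (simp add: innerA_def A_P)
    finally show ?thesis .
  qed
  have "(normA A (T x))\<^sup>2 + (normA A (Ts x))\<^sup>2 = Re (innerA A (Sop x) x)"
    by (simp add: e1 nA_sq)
  also have "\<dots> \<le> cmod (innerA A (P x) (Sop (P x)))" unfolding e2 by (rule complex_Re_le_cmod)
  also have "\<dots> \<le> normA A (P x) * normA A (Sop (P x))" by (rule CS)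
  also have "\<dots> \<le> normA A (P x) * (opnormA A Sop * normA A (P x))"
    by (intro mult_left_mono S_le_N P_M nA_nonneg)
  also have "\<dots> = opnormA A Sop * (normA A x)\<^sup>2" by (simp add: nA_P power2_eq_square)
  finally show ?thesis .
qed

end
end

context posH
begin

context
  fixes T :: "'a \<Rightarrow> 'a"
  assumes TBA: "T \<in> BA A"
begin

lemma build_y:
  assumes u1: "normA A u = 1" and z1: "normA A z = 1" and uz: "innerA A u z = 0"
    and t: "t\<^sup>2 = 1 - (cmod q)\<^sup>2"
  shows "normA A (cnj q *\<^sub>C u + complex_of_real t *\<^sub>C z) = 1"
    "innerA A u (cnj q *\<^sub>C u + complex_of_real t *\<^sub>C z) = q"
    "innerA A (T u) (cnj q *\<^sub>C u + complex_of_real t *\<^sub>C z) = q * innerA A (T u) u + complex_of_real t * innerA A (T u) z"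
proof -
  have uu: "innerA A u u = 1" using u1 by (simp add: iA_self_nA)
  have c0: "innerA A (cnj q *\<^sub>C u) (complex_of_real t *\<^sub>C z) = 0"
    by (simp add: iA_scaleC_left iA_scaleC_right uz)
  have "(normA A (cnj q *\<^sub>C u + complex_of_real t *\<^sub>C z))\<^sup>2 = (cmod q)\<^sup>2 + t\<^sup>2"
    unfolding nA_add_sq c0 by (simp add: nA_scaleC u1 z1 power_mult_distrib)
  also have "\<dots> = 1" using t by simp
  finally show "normA A (cnj q *\<^sub>C u + complex_of_real t *\<^sub>C z) = 1"
    using nA_nonneg by (metis abs_of_nonneg real_sqrt_abs real_sqrt_one)
  show "innerA A u (cnj q *\<^sub>C u + complex_of_real t *\<^sub>C z) = q"
    by (simp add: iA_add_right iA_scaleC_right uu uz)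
  show "innerA A (T u) (cnj q *\<^sub>C u + complex_of_real t *\<^sub>C z) = q * innerA A (T u) u + complex_of_real t * innerA A (T u) z"
    by (simp add: iA_add_right iA_scaleC_right)
qed

abbreviation "Wset q \<equiv> {cmod (innerA A (T x) y) | x y. normA A x = 1 \<and> normA A y = 1 \<and> innerA A x y = q}"

lemma mem_W: "normA A x = 1 \<Longrightarrow> normA A y = 1 \<Longrightarrow> innerA A x y = q \<Longrightarrow> cmod (innerA A (T x) y) \<in> Wset q"
  by blast

lemma W_bdd: "bdd_above (Wset q)"
proof -
  obtain C where C: "C \<ge> 0" "\<forall>x. normA A (T x) \<le> C * normA A x" using T_bounded[OF TBA] by blast
  have "cmod (innerA A (T x) y) \<le> C" if "normA A x = 1" "normA A y = 1" for x y
  proof -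
    have "cmod (innerA A (T x) y) \<le> normA A (T x) * normA A y" by (rule CS)
    also have "\<dots> \<le> C" using that C(2)[rule_format, of x] by simp
    finally show ?thesis .
  qed
  then show ?thesis unfolding bdd_above_def by blast
qed

context
  fixes q :: complex
  assumes dim: "dim_range_ge2 A" and q0: "0 < cmod q" and q1: "cmod q \<le> 1"
begin

definition "sq = sqrt (1 - (cmod q)\<^sup>2)"
lemma sq: "sq\<^sup>2 = 1 - (cmod q)\<^sup>2" "0 \<le> sq"
proof -
  have "(cmod q)\<^sup>2 \<le> 1" using q1 q0 by (simp add: power_le_one)
  then show "sq\<^sup>2 = 1 - (cmod q)\<^sup>2" "0 \<le> sq" by (simp_all add: sq_def)
qed
lemma sq2: "(-sq)\<^sup>2 = 1 - (cmod q)\<^sup>2" using sq by simp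

lemma W_ne: "Wset q \<noteq> {}"
proof -
  obtain u where u: "normA A u = 1" using exists_unit[OF dim] by blast
  obtain z where z: "normA A z = 1" "innerA A u z = 0" using exists_orth[OF dim u] by blast
  show ?thesis using build_y[OF u z sq(1)] u by blast
qed

lemma W_upper: "x \<in> Wset q \<Longrightarrow> x \<le> wqA q A T"
  unfolding wqA_def by (rule cSup_upper) (use W_bdd in auto)

lemma W_nonneg: "0 \<le> wqA q A T"
proof -
  obtain x where "x \<in> Wset q" using W_ne by blast
  moreover then have "0 \<le> x" by auto
  ultimately show ?thesis using W_upper by (meson order_trans)
qed

lemma lower1: assumes u: "normA A u = 1" shows "cmod q * cmod (innerA A (T u) u) \<le> wqA q A T"
proof -
  obtain z where z: "normA A z = 1" "innerA A u z = 0" using exists_orth[OF dim u] by blast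
  define \<alpha> where "\<alpha> = q * innerA A (T u) u"
  define \<beta> where "\<beta> = complex_of_real sq * innerA A (T u) z"
  have y1: "cmod (\<alpha> + \<beta>) \<le> wqA q A T"
    using W_upper[OF mem_W[OF u build_y(1,2)[OF u z sq(1)]]] build_y(3)[OF u z sq(1)]
    unfolding \<alpha>_def \<beta>_def by simp
  have y2: "cmod (\<alpha> - \<beta>) \<le> wqA q A T"
  proof -
    have "cmod (q * innerA A (T u) u + complex_of_real (-sq) * innerA A (T u) z) \<le> wqA q A T"
      using W_upper[OF mem_W[OF u build_y(1,2)[OF u z sq2]]] build_y(3)[OF u z sq2] by simp
    then show ?thesis by (simp add: \<alpha>_def \<beta>_def)
  qed
  have "2 * cmod \<alpha> = cmod ((\<alpha> + \<beta>) + (\<alpha> - \<beta>))" by (simp add: norm_mult[symmetric])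
  also have "\<dots> \<le> cmod (\<alpha> + \<beta>) + cmod (\<alpha> - \<beta>)" by (rule norm_triangle_ineq)
  finally have "cmod \<alpha> \<le> wqA q A T" using y1 y2 by simp
  then show ?thesis by (simp add: \<alpha>_def norm_mult)
qed

lemma wr_nonneg: "0 \<le> wqA q A T / cmod q" using W_nonneg q0 by simp

lemma lower2: "cmod (innerA A (T u) u) \<le> (wqA q A T / cmod q) * (normA A u)\<^sup>2"
proof (cases "normA A u = 0")
  case True
  have "cmod (innerA A (T u) u) \<le> normA A (T u) * normA A u" by (rule CS)
  then show ?thesis using True wr_nonneg by simp
next
  case False
  then have a: "normA A u > 0" using nA_nonneg[of u] by simp
  define u' where "u' = complex_of_real (1 / normA A u) *\<^sub>C u"
  have u'1: "normA A u' = 1" using a by (simp add: u'_def nA_scaleC norm_divide)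
  have "innerA A (T u') u' = complex_of_real (1 / normA A u) * complex_of_real (1 / normA A u) * innerA A (T u) u"
    by (simp add: u'_def bcl_scaleC[OF Tbcl[OF TBA]] iA_scaleC_left iA_scaleC_right)
  then have "cmod (innerA A (T u') u') = cmod (innerA A (T u) u) / (normA A u)\<^sup>2"
    using a by (simp add: norm_mult norm_divide power2_eq_square)
  moreover have "cmod q * cmod (innerA A (T u') u') \<le> wqA q A T" by (rule lower1[OF u'1])
  ultimately have "cmod q * (cmod (innerA A (T u) u) / (normA A u)\<^sup>2) \<le> wqA q A T" by simp
  then have "cmod (innerA A (T u) u) / (normA A u)\<^sup>2 \<le> wqA q A T / cmod q"
    using q0 by (simp add: field_simps)
  then show ?thesis using a by (simp add: divide_le_eq mult.commute)
qed

end
end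
end

context posH
begin

context
  fixes T :: "'a \<Rightarrow> 'a"
  assumes TBA: "T \<in> BA A"
begin

abbreviation "Tsh \<equiv> sharpA A T"

lemma HK_ident:
  "innerA A ((1/2::complex) *\<^sub>C (T p + Tsh p)) ((1/2::complex) *\<^sub>C (T y + Tsh y))
   + innerA A ((- \<i>/2) *\<^sub>C (T p - Tsh p)) ((- \<i>/2) *\<^sub>C (T y - Tsh y))
   = (innerA A (T p) (T y) + innerA A (Tsh p) (Tsh y)) / 2"
proof -
  have c1: "(1/2::complex) * cnj (1/2) = 1/4" by simp
  have c2: "(- \<i>/2) * cnj (- \<i>/2) = 1/4" by (simp add: field_simps)
  show ?thesis
    unfolding iA_scaleC_left iA_scaleC_right mult.assoc[symmetric] c1 c2
    by (simp add: iA_add_left iA_add_right iA_diff_left iA_diff_right field_simps)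
qed

context
  fixes q :: complex
  assumes dim: "dim_range_ge2 A" and q0: "0 < cmod q" and q1: "cmod q \<le> 1"
begin

lemma low2: "cmod (innerA A (T u) u) \<le> (wqA q A T / cmod q) * (normA A u)\<^sup>2"
  using lower2[OF TBA dim q0 q1] .

lemma wnn: "0 \<le> wqA q A T / cmod q" using W_nonneg[OF TBA dim q0 q1] q0 by simp

lemma H_bound: "normA A ((1/2::complex) *\<^sub>C (T z + Tsh z)) \<le> (wqA q A T / cmod q) * normA A z"
proof (rule sa_bound[where R="\<lambda>u. (1/2::complex) *\<^sub>C (T u + Tsh u)"])
  show "\<forall>u v. (1/2::complex) *\<^sub>C (T (u + v) + Tsh (u + v)) = (1/2::complex) *\<^sub>C (T u + Tsh u) + (1/2::complex) *\<^sub>C (T v + Tsh v)"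
    by (simp add: bcl_add[OF Tbcl[OF TBA]] bcl_add[OF Tsbcl[OF TBA]] scaleC_add_right[symmetric] algebra_simps)
  show "\<forall>c u. (1/2::complex) *\<^sub>C (T (c *\<^sub>C u) + Tsh (c *\<^sub>C u)) = c *\<^sub>C ((1/2::complex) *\<^sub>C (T u + Tsh u))"
    by (simp add: bcl_scaleC[OF Tbcl[OF TBA]] bcl_scaleC[OF Tsbcl[OF TBA]] scaleC_add_right[symmetric]
        scaleC_scaleC mult.commute)
  show "\<forall>u v. innerA A ((1/2::complex) *\<^sub>C (T u + Tsh u)) v = innerA A u ((1/2::complex) *\<^sub>C (T v + Tsh v))"
    by (simp add: iA_scaleC_left iA_scaleC_right iA_add_left iA_add_right adj1[OF TBA] adj2[OF TBA])
  show "0 \<le> wqA q A T / cmod q" by (rule wnn)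
  show "\<forall>u. cmod (innerA A ((1/2::complex) *\<^sub>C (T u + Tsh u)) u) \<le> (wqA q A T / cmod q) * (normA A u)\<^sup>2"
  proof
    fix u
    define t where "t = innerA A (T u) u"
    have "innerA A ((1/2::complex) *\<^sub>C (T u + Tsh u)) u = (1/2) * (t + cnj t)"
      by (simp add: t_def iA_scaleC_left iA_add_left adj2[OF TBA] iA_herm[of u "T u"])
    also have "\<dots> = complex_of_real (Re t)" by (simp add: complex_add_cnj)
    finally have "cmod (innerA A ((1/2::complex) *\<^sub>C (T u + Tsh u)) u) = \<bar>Re t\<bar>" by simp
    also have "\<dots> \<le> cmod t" by (rule abs_Re_le_cmod)
    also have "\<dots> \<le> (wqA q A T / cmod q) * (normA A u)\<^sup>2" unfolding t_def by (rule low2)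
    finally show "cmod (innerA A ((1/2::complex) *\<^sub>C (T u + Tsh u)) u) \<le> (wqA q A T / cmod q) * (normA A u)\<^sup>2" .
  qed
qed

lemma K_bound: "normA A ((- \<i>/2) *\<^sub>C (T z - Tsh z)) \<le> (wqA q A T / cmod q) * normA A z"
proof (rule sa_bound[where R="\<lambda>u. (- \<i>/2) *\<^sub>C (T u - Tsh u)"])
  show "\<forall>u v. (- \<i>/2) *\<^sub>C (T (u + v) - Tsh (u + v)) = (- \<i>/2) *\<^sub>C (T u - Tsh u) + (- \<i>/2) *\<^sub>C (T v - Tsh v)"
    by (simp add: bcl_add[OF Tbcl[OF TBA]] bcl_add[OF Tsbcl[OF TBA]] scaleC_add_right[symmetric] algebra_simps)
  show "\<forall>c u. (- \<i>/2) *\<^sub>C (T (c *\<^sub>C u) - Tsh (c *\<^sub>C u)) = c *\<^sub>C ((- \<i>/2) *\<^sub>C (T u - Tsh u))"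
    by (simp add: bcl_scaleC[OF Tbcl[OF TBA]] bcl_scaleC[OF Tsbcl[OF TBA]] scaleC_diff_right[symmetric]
        scaleC_scaleC mult.commute)
  show "\<forall>u v. innerA A ((- \<i>/2) *\<^sub>C (T u - Tsh u)) v = innerA A u ((- \<i>/2) *\<^sub>C (T v - Tsh v))"
    by (simp add: iA_scaleC_left iA_scaleC_right iA_diff_left iA_diff_right adj1[OF TBA] adj2[OF TBA]
        algebra_simps)
  show "0 \<le> wqA q A T / cmod q" by (rule wnn)
  show "\<forall>u. cmod (innerA A ((- \<i>/2) *\<^sub>C (T u - Tsh u)) u) \<le> (wqA q A T / cmod q) * (normA A u)\<^sup>2"
  proof
    fix u
    define t where "t = innerA A (T u) u"
    have "innerA A ((- \<i>/2) *\<^sub>C (T u - Tsh u)) u = (- \<i>/2) * (t - cnj t)"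
      by (simp add: t_def iA_scaleC_left iA_diff_left adj2[OF TBA] iA_herm[of u "T u"])
    also have "\<dots> = complex_of_real (Im t)" by (simp add: complex_diff_cnj field_simps)
    finally have "cmod (innerA A ((- \<i>/2) *\<^sub>C (T u - Tsh u)) u) = \<bar>Im t\<bar>" by simp
    also have "\<dots> \<le> cmod t" by (rule abs_Im_le_cmod)
    also have "\<dots> \<le> (wqA q A T / cmod q) * (normA A u)\<^sup>2" unfolding t_def by (rule low2)
    finally show "cmod (innerA A ((- \<i>/2) *\<^sub>C (T u - Tsh u)) u) \<le> (wqA q A T / cmod q) * (normA A u)\<^sup>2" .
  qed
qed

lemma S_bound4: "normA A (Sop T p) \<le> 4 * (wqA q A T / cmod q)\<^sup>2 * normA A p"
proof -
  define w where "w = wqA q A T / cmod q"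
  define H where "H u = (1/2::complex) *\<^sub>C (T u + Tsh u)" for u
  define K where "K u = (- \<i>/2) *\<^sub>C (T u - Tsh u)" for u
  define c where "c = normA A (Sop T p)"
  define a where "a = normA A p"
  have w0: "0 \<le> w" using wnn by (simp add: w_def)
  have a0: "0 \<le> a" and c0: "0 \<le> c" by (simp_all add: a_def c_def nA_nonneg)
  have Hb: "normA A (H z) \<le> w * normA A z" for z using H_bound by (simp add: H_def w_def)
  have Kb: "normA A (K z) \<le> w * normA A z" for z using K_bound by (simp add: K_def w_def)
  have id: "innerA A (Sop T p) y = 2 * (innerA A (H p) (H y) + innerA A (K p) (K y))" for y
    unfolding H_def K_def HK_ident by (simp add: iA_add_left adj1[OF TBA] adj2[OF TBA])
  have "c\<^sup>2 = Re (innerA A (Sop T p) (Sop T p))" by (simp add: c_def nA_sq)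
  also have "\<dots> = 2 * (Re (innerA A (H p) (H (Sop T p))) + Re (innerA A (K p) (K (Sop T p))))"
    by (simp add: id)
  also have "\<dots> \<le> 2 * (normA A (H p) * normA A (H (Sop T p)) + normA A (K p) * normA A (K (Sop T p)))"
  proof -
    have "Re (innerA A (H p) (H (Sop T p))) \<le> normA A (H p) * normA A (H (Sop T p))"
      using complex_Re_le_cmod CS order_trans by blast
    moreover have "Re (innerA A (K p) (K (Sop T p))) \<le> normA A (K p) * normA A (K (Sop T p))"
      using complex_Re_le_cmod CS order_trans by blast
    ultimately show ?thesis by simp
  qed
  also have "\<dots> \<le> 2 * ((w * a) * (w * c) + (w * a) * (w * c))"
    using Hb[of p] Hb[of "Sop T p"] Kb[of p] Kb[of "Sop T p"] nA_nonneg w0 a0 c0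
    unfolding a_def c_def
    by (intro mult_left_mono add_mono mult_mono) (auto intro: mult_nonneg_nonneg)
  also have "\<dots> = (4 * w\<^sup>2 * a) * c" by (simp add: power2_eq_square algebra_simps)
  finally have "c * c \<le> (4 * w\<^sup>2 * a) * c" by (simp add: power2_eq_square)
  then have "c \<le> 4 * w\<^sup>2 * a" using c0
    by (metis less_eq_real_def mult_le_cancel_right mult_zero_left mult_nonneg_nonneg
        zero_le_power2 zero_le_numeral a0)
  then show ?thesis by (simp add: c_def a_def w_def)
qed

end
end
end

context posH
begin

context
  fixes T :: "'a \<Rightarrow> 'a"
  assumes TBA: "T \<in> BA A"
begin

context
  fixes q :: complex
  assumes dim: "dim_range_ge2 A" and q0: "0 < cmod q" and q1: "cmod q \<le> 1"
begin

lemma upper_elem: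
  assumes x1: "normA A x = 1" and y1: "normA A y = 1" and xy: "innerA A x y = q"
  shows "(cmod (innerA A (T x) y))\<^sup>2 \<le>
     (2 - (cmod q)\<^sup>2 + 4 * cmod q * sqrt (1 - (cmod q)\<^sup>2)) / 2 * opnormA A (Sop T)"
proof -
  define s where "s = sqrt (1 - (cmod q)\<^sup>2)"
  have qq: "(cmod q)\<^sup>2 \<le> 1" using q1 q0 by (simp add: power_le_one)
  have s2: "s\<^sup>2 = 1 - (cmod q)\<^sup>2" and s0: "0 \<le> s" using qq by (simp_all add: s_def)
  define r where "r = y - cnj q *\<^sub>C x"
  have xx: "innerA A x x = 1" using x1 by (simp add: iA_self_nA)
  have yx: "innerA A y x = cnj q" using xy iA_herm[of y x] by simp
  have "(normA A r)\<^sup>2 = (normA A y)\<^sup>2 - 2 * Re (innerA A y (cnj q *\<^sub>C x)) + (normA A (cnj q *\<^sub>C x))\<^sup>2"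
    unfolding r_def by (rule nA_diff_sq)
  also have "innerA A y (cnj q *\<^sub>C x) = q * cnj q" by (simp add: iA_scaleC_right yx)
  also have "q * cnj q = complex_of_real ((cmod q)\<^sup>2)" by (simp only: complex_norm_square)
  finally have "(normA A r)\<^sup>2 = 1 - (cmod q)\<^sup>2" using y1 x1 by (simp add: nA_scaleC power_mult_distrib)
  then have nr: "normA A r = s" using s2 s0 nA_nonneg[of r] by (metis power2_eq_iff_nonneg)
  have ey: "y = cnj q *\<^sub>C x + r" by (simp add: r_def)
  have eT: "innerA A (T x) y = q * innerA A (T x) x + innerA A (T x) r"
    unfolding ey by (simp add: iA_add_right iA_scaleC_right)
  define m where "m = cmod (innerA A (T x) x)"
  define a where "a = normA A (T x)"
  define b where "b = normA A (sharpA A T x)"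
  have ma: "m \<le> a" using CS[of "T x" x] x1 by (simp add: m_def a_def)
  have mb: "m \<le> b" using CS[of x "sharpA A T x"] x1 by (simp add: m_def b_def adj1[OF TBA])
  have ab: "a\<^sup>2 + b\<^sup>2 \<le> opnormA A (Sop T)" using key_ab[OF TBA, of x] x1 by (simp add: a_def b_def)
  have "cmod (innerA A (T x) y) \<le> cmod (q * innerA A (T x) x) + cmod (innerA A (T x) r)"
    unfolding eT by (rule norm_triangle_ineq)
  also have "\<dots> \<le> cmod q * m + s * a"
  proof -
    have "cmod (innerA A (T x) r) \<le> a * s" using CS[of "T x" r] nr by (simp add: a_def)
    then show ?thesis by (simp add: norm_mult m_def mult.commute)
  qed
  finally have X: "cmod (innerA A (T x) y) \<le> cmod q * m + s * a" .
  show ?thesis unfolding s_def[symmetric]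
    by (rule arith_upper[OF _ s0 s2 _ ma mb ab X]) (auto simp: m_def)
qed

lemma main_upper:
  "(wqA q A T)\<^sup>2 \<le> (2 - (cmod q)\<^sup>2 + 4 * cmod q * sqrt (1 - (cmod q)\<^sup>2)) / 2 * opnormA A (Sop T)"
proof -
  define B where "B = (2 - (cmod q)\<^sup>2 + 4 * cmod q * sqrt (1 - (cmod q)\<^sup>2)) / 2 * opnormA A (Sop T)"
  have el: "X \<le> sqrt B" if "X \<in> Wset T q" for X
    using that upper_elem by (auto simp: B_def intro!: real_le_rsqrt)
  have B0: "0 \<le> B"
  proof -
    obtain X where "X \<in> Wset T q" using W_ne[OF TBA dim q0 q1] by blast
    then show ?thesis using upper_elem unfolding B_def by (smt (verit) mem_Collect_eq zero_le_power2)
  qed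
  have "wqA q A T \<le> sqrt B" unfolding wqA_def
    by (rule cSup_least) (use W_ne[OF TBA dim q0 q1] el in auto)
  then have "(wqA q A T)\<^sup>2 \<le> (sqrt B)\<^sup>2" using W_nonneg[OF TBA dim q0 q1] by (intro power_mono) auto
  then show ?thesis using B0 by (simp add: B_def)
qed

lemma main_lower: "(cmod q)\<^sup>2 / 4 * opnormA A (Sop T) \<le> (wqA q A T)\<^sup>2"
proof -
  define w where "w = wqA q A T / cmod q"
  have "opnormA A (Sop T) \<le> 4 * w\<^sup>2" unfolding opnormA_def
  proof (rule cSup_least)
    show "{normA A (Sop T x) / normA A x |x. x \<in> M \<and> x \<noteq> 0} \<noteq> {}"
      using exists_nonzero_M[OF dim] by blast
    fix r assume "r \<in> {normA A (Sop T x) / normA A x |x. x \<in> M \<and> x \<noteq> 0}"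
    then obtain p where p: "p \<in> M" "p \<noteq> 0" "r = normA A (Sop T p) / normA A p" by blast
    have "normA A (Sop T p) \<le> 4 * w\<^sup>2 * normA A p"
      using S_bound4[OF TBA dim q0 q1] by (simp add: w_def)
    then show "r \<le> 4 * w\<^sup>2" using p nA_pos_M[OF TBA p(1,2)] by (simp add: divide_le_eq)
  qed
  then have "(cmod q)\<^sup>2 / 4 * opnormA A (Sop T) \<le> (cmod q)\<^sup>2 / 4 * (4 * w\<^sup>2)"
    by (intro mult_left_mono) auto
  also have "\<dots> = (wqA q A T)\<^sup>2" using q0 by (simp add: w_def power_divide)
  finally show ?thesis .
qed

end
end
end

theorem mainTheorem1:
  fixes A T :: "'a::chilbert_space \<Rightarrow> 'a" and q :: complex
  assumes "positive_op A"
    and "dim_range_ge2 A"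
    and "T \<in> BA A"
    and "0 < cmod q" and "cmod q \<le> 1"
  shows "(cmod q)\<^sup>2 / 4 * opnormA A (\<lambda>x. sharpA A T (T x) + T (sharpA A T x)) \<le> (wqA q A T)\<^sup>2
       \<and> (wqA q A T)\<^sup>2 \<le> (2 - (cmod q)\<^sup>2 + 4 * cmod q * sqrt (1 - (cmod q)\<^sup>2)) / 2
            * opnormA A (\<lambda>x. T (sharpA A T x) + sharpA A T (T x))"
proof -
  interpret posH A by unfold_locales (rule assms(1))
  have e: "(\<lambda>x. T (sharpA A T x) + sharpA A T (T x)) = (\<lambda>x. sharpA A T (T x) + T (sharpA A T x))"
    by (rule ext) (rule add.commute)
  show ?thesis unfolding e
    using main_lower[OF assms(3,2,4,5)] main_upper[OF assms(3,2,4,5)] by blast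
qed

end
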